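(* With the notation of the context, for every $\Gamma>0$, $$\|\mathbf 1_{B_\Gamma}\mathrm T^{{\rm b},m}\|^2_{kk_1k_2k_3}\lesssim N_{\min}N_{\rm med},$$ $$\|\mathbf 1_{B_\Gamma}\mathrm T^{{\rm b},m}\|^2_{k_1\to kk_2k_3},\ \ \|\mathbf 1_{B_\Gamma}\mathrm T^{{\rm b},m}\|^2_{k_2\to kk_1k_3},\ \ \|\mathbf 1_{B_\Gamma}\mathrm T^{{\rm b},m}\|^2_{k_3\to kk_1k_2}\ \lesssim N_{\rm med}.$$
   Context: Fix $\alpha\in(1,2)$, dyadic numbers $1\le N_1,N_2,N_3\le N$, a real number $m$ and a constant $C_0>0$. Let $S$ be the set of $(k,k_1,k_2,k_3)\in\mathbb Z^4$ with $k=k_1-k_2+k_3$, $k_2\notin\{k_1,k_3\}$, $\big||k_1|^\alpha-|k_2|^\alpha+|k_3|^\alpha-|k|^\alpha-m\big|\le C_0$, $|k|\le N$ and $|k_j|\le N_j$ for $j=1,2,3$. The base tensor is $\mathrm T^{{\rm b},m}_{kk_1k_2k_3}=\mathbf 1_S(k,k_1,k_2,k_3)$. $N_{\max}\ge N_{\rm med}\ge N_{\min}$ is the decreasing rearrangement of $N_1,N_2,N_3$; fix $j_*$ with $N_{j_*}=N_{\max}$ and let $k_{\max}=k_{j_*}$; $B_\Gamma=\{(k,k_1,k_2,k_3)\in S:|k_{\max}|\le\Gamma<|k|\}$. For a tensor $H=H_{k_A}$ and a partition $(B,C)$ of the index set $A$, $\|H\|_{k_B\to k_C}^2=\sup\{\sum_{k_C}|\sum_{k_B}H_{k_A}z_{k_B}|^2:\sum_{k_B}|z_{k_B}|^2=1\}$;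 $\|H\|_{k_A}$ is the $\ell^2_{k_A}$ norm. $A\lesssim B$ means $A\le CB$ with $C$ depending only on $\alpha$ and $C_0$. *)

theory Defs
  imports "HOL-Analysis.Analysis"
begin

type_synonym idx4 = "int \<times> int \<times> int \<times> int"   (* (k, k1, k2, k3) *)

definition dyadic :: "nat \<Rightarrow> bool" where
  "dyadic N \<longleftrightarrow> (\<exists>n::nat. N = 2 ^ n)"

definition med3 :: "nat \<Rightarrow> nat \<Rightarrow> nat \<Rightarrow> nat" where
  "med3 a b c = a + b + c - max a (max b c) - min a (min b c)"

definition resS :: "real \<Rightarrow> real \<Rightarrow> real \<Rightarrow> nat \<Rightarrow> nat \<Rightarrow> nat \<Rightarrow> nat \<Rightarrow> idx4 set" where
  "resS \<alpha> C0 m N N1 N2 N3 = {(k, k1, k2, k3).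
      k = k1 - k2 + k3 \<and> k2 \<noteq> k1 \<and> k2 \<noteq> k3 \<and>
      \<bar>(real_of_int \<bar>k1\<bar>) powr \<alpha> - (real_of_int \<bar>k2\<bar>) powr \<alpha> + (real_of_int \<bar>k3\<bar>) powr \<alpha>
        - (real_of_int \<bar>k\<bar>) powr \<alpha> - m\<bar> \<le> C0 \<and>
      \<bar>k\<bar> \<le> int N \<and> \<bar>k1\<bar> \<le> int N1 \<and> \<bar>k2\<bar> \<le> int N2 \<and> \<bar>k3\<bar> \<le> int N3}"

definition Tbase :: "real \<Rightarrow> real \<Rightarrow> real \<Rightarrow> nat \<Rightarrow> nat \<Rightarrow> nat \<Rightarrow> nat \<Rightarrow> idx4 \<Rightarrow> complex" where
  "Tbase \<alpha> C0 m N N1 N2 N3 = indicator (resS \<alpha> C0 m N N1 N2 N3)"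

definition kcomp :: "nat \<Rightarrow> idx4 \<Rightarrow> int" where
  "kcomp j x = (case x of (k, k1, k2, k3) \<Rightarrow> if j = 1 then k1 else if j = 2 then k2 else k3)"

definition Bset :: "real \<Rightarrow> real \<Rightarrow> real \<Rightarrow> nat \<Rightarrow> nat \<Rightarrow> nat \<Rightarrow> nat \<Rightarrow> nat \<Rightarrow> real \<Rightarrow> idx4 set" where
  "Bset \<alpha> C0 m N N1 N2 N3 js \<Gamma> =
     {x \<in> resS \<alpha> C0 m N N1 N2 N3. real_of_int \<bar>kcomp js x\<bar> \<le> \<Gamma> \<and> \<Gamma> < real_of_int \<bar>fst x\<bar>}"

definition hs_norm_sq :: "('a \<Rightarrow> complex) \<Rightarrow> real" where
  "hs_norm_sq H = (\<Sum>\<^sub>\<infinity>x. (cmod (H x))\<^sup>2)"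

text \<open>Squared operator norm k_B -> k_C of a tensor written as H b c
  (b = input indices, c = output indices).\<close>
definition op_norm_sq :: "('b \<Rightarrow> 'c \<Rightarrow> complex) \<Rightarrow> real" where
  "op_norm_sq H = Sup {(\<Sum>\<^sub>\<infinity>c. (cmod (\<Sum>\<^sub>\<infinity>b. H b c * z b))\<^sup>2) | z.
       (\<lambda>b. (cmod (z b))\<^sup>2) summable_on UNIV \<and> (\<Sum>\<^sub>\<infinity>b. (cmod (z b))\<^sup>2) = 1}"

end

theory Submission
  imports Defs
begin

lemma powr_mvt:
  fixes u v q :: real
  assumes "0 < u" "u < v"
  shows "\<exists>\<xi>. u < \<xi> \<and> \<xi> < v \<and> v powr q - u powr q = (v - u) * (q * \<xi> powr (q - 1))"
proof -
  have "\<And>x. u \<le> x \<Longrightarrow> x \<le> v \<Longrightarrow> ((\<lambda>x. x powr q) has_real_derivative q * x powr (q - 1)) (at x)"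
    using assms by (intro has_real_derivative_powr) auto
  from MVT2[OF assms(2) this] show ?thesis by auto
qed

lemma pow_lower:
  fixes a P u v :: real
  assumes "1 < a" "0 < P" "P \<le> u" "u \<le> v"
  shows "a * P powr (a - 1) * (v - u) \<le> v powr a - u powr a"
proof (cases "u = v")
  case False
  then have "u < v" using assms by auto
  then obtain \<xi> where x: "u < \<xi>" "\<xi> < v" "v powr a - u powr a = (v - u) * (a * \<xi> powr (a - 1))"
    using powr_mvt[of u v a] assms by auto
  have "P powr (a - 1) \<le> \<xi> powr (a - 1)"
    using assms x by (intro powr_mono2) auto
  then have "(v - u) * (a * P powr (a - 1)) \<le> (v - u) * (a * \<xi> powr (a - 1))"
    using assms x by (intro mult_left_mono) auto
  then show ?thesis using x by (simp add: algebra_simps)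
qed simp

lemma pow_upper:
  fixes a L u v :: real
  assumes "1 < a" "0 \<le> u" "u \<le> v" "v \<le> L"
  shows "v powr a - u powr a \<le> a * L powr (a - 1) * (v - u)"
proof (cases "u = 0")
  case True
  have "v powr a = v * v powr (a - 1)"
    using assms by (cases "v = 0") (auto simp: powr_diff powr_one_eq_one field_simps powr_gt_zero)
  also have "\<dots> \<le> v * L powr (a - 1)"
    using assms by (intro mult_left_mono powr_mono2) auto
  also have "\<dots> \<le> a * L powr (a - 1) * v"
    using assms mult_right_mono[of 1 a "v * L powr (a - 1)"] by (simp add: algebra_simps)
  finally show ?thesis using True assms by simp
next
  case False
  show ?thesis
  proof (cases "u = v")
    case False
    then have "u < v" "0 < u" using assms \<open>u \<noteq> 0\<close> by auto
    then obtain \<xi> where x: "u < \<xi>" "\<xi> < v" "v powr a - u powr a = (v - u) * (a * \<xi> powr (a - 1))"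
      using powr_mvt[of u v a] by auto
    have "\<xi> powr (a - 1) \<le> L powr (a - 1)"
      using assms x \<open>0 < u\<close> by (intro powr_mono2) auto
    then have "(v - u) * (a * \<xi> powr (a - 1)) \<le> (v - u) * (a * L powr (a - 1))"
      using assms x by (intro mult_left_mono) auto
    then show ?thesis using x by (simp add: algebra_simps)
  qed simp
qed

lemma pow_lip:
  fixes a L s t :: real
  assumes "1 < a" "\<bar>s\<bar> \<le> L" "\<bar>t\<bar> \<le> L"
  shows "\<bar>\<bar>s\<bar> powr a - \<bar>t\<bar> powr a\<bar> \<le> a * L powr (a - 1) * \<bar>s - t\<bar>"
proof -
  have "0 \<le> a * L powr (a - 1)" using assms by auto
  show ?thesis
  proof (cases "\<bar>s\<bar> \<le> \<bar>t\<bar>")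
    case True
    have "\<bar>t\<bar> powr a - \<bar>s\<bar> powr a \<le> a * L powr (a - 1) * (\<bar>t\<bar> - \<bar>s\<bar>)"
      using pow_upper[of a "\<bar>s\<bar>" "\<bar>t\<bar>" L] True assms by auto
    also have "\<dots> \<le> a * L powr (a - 1) * \<bar>s - t\<bar>"
      using \<open>0 \<le> a * L powr (a - 1)\<close> by (intro mult_left_mono) auto
    finally show ?thesis using True assms
      by (smt (verit) powr_mono2)
  next
    case False
    have "\<bar>s\<bar> powr a - \<bar>t\<bar> powr a \<le> a * L powr (a - 1) * (\<bar>s\<bar> - \<bar>t\<bar>)"
      using pow_upper[of a "\<bar>t\<bar>" "\<bar>s\<bar>" L] False assms by auto
    also have "\<dots> \<le> a * L powr (a - 1) * \<bar>s - t\<bar>"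
      using \<open>0 \<le> a * L powr (a - 1)\<close> by (intro mult_left_mono) auto
    finally show ?thesis using False assms
      by (smt (verit) powr_mono2)
  qed
qed

lemma conc_step:
  fixes p n :: real
  assumes "0 < p" "p < 1" "0 \<le> n"
  shows "p / (n + 1) \<le> (n + 1) powr p - n powr p"
proof (cases "n = 0")
  case True then show ?thesis using assms by simp
next
  case False
  then have "0 < n" using assms by auto
  then obtain \<xi> where x: "n < \<xi>" "\<xi> < n + 1" "(n+1) powr p - n powr p = (n + 1 - n) * (p * \<xi> powr (p - 1))"
    using powr_mvt[of n "n+1" p] by auto
  have "(n+1) powr (p - 1) \<le> \<xi> powr (p - 1)"
    using x \<open>0<n\<close> assms by (intro powr_mono2') auto
  moreover have "(n+1) powr (-1) \<le> (n+1) powr (p - 1)"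
    using assms by (intro powr_mono) auto
  moreover have "(n+1) powr (-1) = 1 / (n + 1)" using assms by (simp add: powr_minus divide_inverse)
  ultimately have "1/(n+1) \<le> \<xi> powr (p - 1)" by simp
  then have "p * (1/(n+1)) \<le> p * \<xi> powr (p - 1)" using assms by (intro mult_left_mono) auto
  then show ?thesis using x by simp
qed

lemma harm_powr_bound:
  fixes p :: real
  assumes "0 < p" "p < 1"
  shows "harm n \<le> real n powr p / p"
proof (induction n)
  case 0 then show ?case by (simp add: harm_expand)
next
  case (Suc n)
  have "harm (Suc n) = harm n + 1 / (real n + 1)" by (simp add: harm_Suc field_simps)
  also have "\<dots> \<le> real n powr p / p + ((real n + 1) powr p - real n powr p) / p"
  proof -
    have "1 / (real n + 1) = (p / (real n + 1)) / p" using assms by simp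
    also have "\<dots> \<le> ((real n + 1) powr p - real n powr p) / p"
      using conc_step[OF assms, of "real n"] assms by (intro divide_right_mono) auto
    finally show ?thesis using Suc by linarith
  qed
  also have "\<dots> = real (Suc n) powr p / p" by (simp add: field_simps add_divide_distrib diff_divide_distrib)
  finally show ?case .
qed


definition ph :: "real \<Rightarrow> int \<Rightarrow> real" where
  "ph a t = real_of_int \<bar>t\<bar> powr a"

definition kap :: "real \<Rightarrow> real" where
  "kap a = min (a * (a - 1)) (2 powr a - 2)"

lemma kap_pos: "1 < a \<Longrightarrow> 0 < kap a"
proof -
  assume a: "1 < a"
  have "2 powr 1 < 2 powr a" using a by (intro powr_less_mono) auto
  then show ?thesis using a by (simp add: kap_def)
qed

lemma unit2_pos:
  fixes a R :: real and t :: int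
  assumes a: "1 < a" "a < 2" and R: "1 \<le> R" and t: "0 \<le> t" "t + 2 \<le> R"
  shows "kap a * R powr (a - 2) \<le> ph a (t + 2) - 2 * ph a (t + 1) + ph a t"
proof (cases "t = 0")
  case True
  have "R powr (a - 2) \<le> R powr 0" using R a by (intro powr_mono) auto
  then have "R powr (a - 2) \<le> 1" using R by simp
  then have "kap a * R powr (a - 2) \<le> kap a" using kap_pos[OF a(1)] by (simp add: mult_left_le)
  also have "\<dots> \<le> 2 powr a - 2" by (simp add: kap_def)
  finally show ?thesis using True by (simp add: ph_def)
next
  case False
  then have t1: "1 \<le> t" using t by auto
  define T where "T = real_of_int t"
  have T1: "1 \<le> T" using t1 by (simp add: T_def)
  define G where "G = (\<lambda>s::real. (s + 1) powr a - s powr a)"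
  define G' where "G' = (\<lambda>s::real. a * (s + 1) powr (a - 1) - a * s powr (a - 1))"
  have der: "\<And>s. T \<le> s \<Longrightarrow> s \<le> T + 1 \<Longrightarrow> (G has_real_derivative G' s) (at s)"
    unfolding G_def G'_def using T1
    by (auto intro!: derivative_eq_intros)
  obtain \<xi> where xi: "T < \<xi>" "\<xi> < T + 1" "G (T + 1) - G T = (T + 1 - T) * G' \<xi>"
    using MVT2[of T "T+1" G G'] der by auto
  obtain \<eta> where eta: "\<xi> < \<eta>" "\<eta> < \<xi> + 1"
      "(\<xi> + 1) powr (a - 1) - \<xi> powr (a - 1) = (\<xi> + 1 - \<xi>) * ((a - 1) * \<eta> powr (a - 1 - 1))"
    using powr_mvt[of \<xi> "\<xi> + 1" "a - 1"] xi T1 by auto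
  have "(\<xi> + 1) powr (a - 2) \<le> \<eta> powr (a - 2)"
    using eta xi T1 a by (intro powr_mono2') auto
  moreover have "(T + 2) powr (a - 2) \<le> (\<xi> + 1) powr (a - 2)"
    using eta xi T1 a by (intro powr_mono2') auto
  moreover have "R powr (a - 2) \<le> (T + 2) powr (a - 2)"
    using t T1 a by (intro powr_mono2') (auto simp: T_def)
  ultimately have "R powr (a - 2) \<le> \<eta> powr (a - 2)" by linarith
  then have "a * (a - 1) * R powr (a - 2) \<le> a * (a - 1) * \<eta> powr (a - 2)"
    using a by (intro mult_left_mono) auto
  moreover have "kap a * R powr (a - 2) \<le> a * (a - 1) * R powr (a - 2)"
    by (intro mult_right_mono) (auto simp: kap_def)
  moreover have "G' \<xi> = a * ((a - 1) * \<eta> powr (a - 2))"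
  proof -
    have E: "(\<xi> + 1) powr (a - 1) - \<xi> powr (a - 1) = (a - 1) * \<eta> powr (a - 2)"
      using eta(3) by (simp add: diff_diff_eq)
    have "G' \<xi> = a * ((\<xi> + 1) powr (a - 1) - \<xi> powr (a - 1))" by (simp add: G'_def algebra_simps)
    then show ?thesis using E by simp
  qed
  moreover have "ph a (t + 2) - 2 * ph a (t + 1) + ph a t = G (T + 1) - G T"
    using t1 by (simp add: ph_def G_def T_def algebra_simps)
  ultimately show ?thesis using xi by (simp add: algebra_simps)
qed

lemma unit2:
  fixes a R :: real and t :: int
  assumes a: "1 < a" "a < 2" and R: "1 \<le> R" and t: "- R \<le> t" "t + 2 \<le> R"
  shows "kap a * R powr (a - 2) \<le> ph a (t + 2) - 2 * ph a (t + 1) + ph a t"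
proof -
  have Rle: "R powr (a - 2) \<le> 1"
  proof -
    have "R powr (a - 2) \<le> R powr 0" using R a by (intro powr_mono) auto
    then show ?thesis using R by simp
  qed
  consider "0 \<le> t" | "t = -1" | "t \<le> -2" by linarith
  then show ?thesis
  proof cases
    case 1 then show ?thesis using unit2_pos[OF a R] t by auto
  next
    case 2
    have "kap a * R powr (a - 2) \<le> kap a" using Rle kap_pos[OF a(1)] by (simp add: mult_left_le)
    also have "kap a \<le> a * (a - 1)" by (simp add: kap_def)
    also have "a * (a - 1) \<le> 2 * 1" using a by (intro mult_mono) auto
    finally show ?thesis using 2 by (simp add: ph_def)
  next
    case 3
    define t' where "t' = - t - 2"
    have "kap a * R powr (a - 2) \<le> ph a (t' + 2) - 2 * ph a (t' + 1) + ph a t'"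
      using unit2_pos[OF a R, of t'] 3 t by (auto simp: t'_def)
    also have "\<dots> = ph a (t + 2) - 2 * ph a (t + 1) + ph a t"
    proof -
      have "\<bar>t' + 2\<bar> = \<bar>t\<bar>" "\<bar>t' + 1\<bar> = \<bar>t + 1\<bar>" "\<bar>t'\<bar> = \<bar>t + 2\<bar>" using 3 by (auto simp: t'_def)
      then show ?thesis by (simp add: ph_def)
    qed
    finally show ?thesis .
  qed
qed

definition gdiff :: "real \<Rightarrow> nat \<Rightarrow> int \<Rightarrow> real" where
  "gdiff a c t = ph a (t + int c) - ph a t"

lemma gdiff_step:
  fixes a R :: real and t :: int
  assumes a: "1 < a" "a < 2" and R: "1 \<le> R" and t: "- R \<le> t" "t + int c + 1 \<le> R"
  shows "real c * (kap a * R powr (a - 2)) \<le> gdiff a c (t + 1) - gdiff a c t"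
  using t
proof (induction c)
  case 0 then show ?case by (simp add: gdiff_def)
next
  case (Suc c)
  have IH: "real c * (kap a * R powr (a - 2)) \<le> gdiff a c (t + 1) - gdiff a c t"
    using Suc by auto
  have U: "kap a * R powr (a - 2) \<le> ph a (t + int c + 2) - 2 * ph a (t + int c + 1) + ph a (t + int c)"
    using unit2[OF a R, of "t + int c"] Suc.prems by auto
  have "gdiff a (Suc c) (t + 1) - gdiff a (Suc c) t = (gdiff a c (t + 1) - gdiff a c t)
      + (ph a (t + int c + 2) - 2 * ph a (t + int c + 1) + ph a (t + int c))"
    by (simp add: gdiff_def algebra_simps)
  then show ?case using IH U by (simp add: algebra_simps)
qed

lemma gdiff_dd:
  fixes a R :: real and x :: int
  assumes a: "1 < a" "a < 2" and R: "1 \<le> R" and x: "- R \<le> x" "x + int c + int d \<le> R"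
  shows "real c * real d * (kap a * R powr (a - 2)) \<le> gdiff a c (x + int d) - gdiff a c x"
  using x
proof (induction d)
  case 0 then show ?case by simp
next
  case (Suc d)
  have IH: "real c * real d * (kap a * R powr (a - 2)) \<le> gdiff a c (x + int d) - gdiff a c x"
    using Suc by auto
  have S: "real c * (kap a * R powr (a - 2)) \<le> gdiff a c (x + int d + 1) - gdiff a c (x + int d)"
    using gdiff_step[OF a R, of "x + int d" c] Suc.prems by auto
  show ?case using IH S by (simp add: algebra_simps)
qed

lemma sep_small:
  fixes a R :: real and x x' c :: int
  assumes a: "1 < a" "a < 2" and R: "1 \<le> R" and xx: "x < x'"
    and b: "\<bar>x\<bar> \<le> R" "\<bar>x'\<bar> \<le> R" "\<bar>x + c\<bar> \<le> R" "\<bar>x' + c\<bar> \<le> R"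
  shows "real_of_int \<bar>c\<bar> * kap a * R powr (a - 2) * real_of_int (x' - x)
     \<le> \<bar>(ph a x' - ph a (x' + c)) - (ph a x - ph a (x + c))\<bar>"
proof -
  define d where "d = nat (x' - x)"
  have x'd: "x' = x + int d" using xx by (simp add: d_def)
  consider "0 \<le> c" | "c < 0" by linarith
  then show ?thesis
  proof cases
    case 1
    define c' where "c' = nat c"
    have cc: "c = int c'" using 1 by (simp add: c'_def)
    have "real c' * real d * (kap a * R powr (a - 2)) \<le> gdiff a c' (x + int d) - gdiff a c' x"
      using gdiff_dd[OF a R, of x c' d] b x'd cc by auto
    then show ?thesis using cc x'd by (simp add: gdiff_def algebra_simps abs_if split: if_splits)
  next
    case 2
    define c' where "c' = nat (- c)"
    have cc: "c = - int c'" using 2 by (simp add: c'_def)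
    have "real c' * real d * (kap a * R powr (a - 2)) \<le> gdiff a c' (x + c + int d) - gdiff a c' (x + c)"
      using gdiff_dd[OF a R, of "x + c" c' d] b x'd cc by auto
    then show ?thesis using cc x'd 2 by (simp add: gdiff_def algebra_simps abs_if split: if_splits)
  qed
qed


lemma ph_mono_diff:
  fixes a P :: real and x x' :: int
  assumes a: "1 < a" and P: "0 < P" and xx: "x < x'" "0 < x * x'" and b: "P \<le> \<bar>x\<bar>" "P \<le> \<bar>x'\<bar>"
  shows "a * P powr (a - 1) * real_of_int (x' - x) \<le> \<bar>ph a x' - ph a x\<bar>"
proof (cases "0 < x")
  case True
  then have "0 < x'" using xx by auto
  have "a * P powr (a - 1) * (real_of_int x' - real_of_int x) \<le> real_of_int x' powr a - real_of_int x powr a"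
    using pow_lower[OF a P, of "real_of_int x" "real_of_int x'"] b True xx by auto
  then show ?thesis using True \<open>0 < x'\<close> by (simp add: ph_def)
next
  case False
  then have "x < 0" "x' < 0" using xx by (auto simp: zero_less_mult_iff)
  have "a * P powr (a - 1) * (real_of_int (- x) - real_of_int (- x')) \<le> real_of_int (- x) powr a - real_of_int (- x') powr a"
    using pow_lower[OF a P, of "real_of_int (-x')" "real_of_int (-x)"] b \<open>x < 0\<close> \<open>x' < 0\<close> xx by auto
  then show ?thesis using \<open>x < 0\<close> \<open>x' < 0\<close> by (simp add: ph_def)
qed

definition dbig :: "real \<Rightarrow> real" where
  "dbig a = a * (2 powr (a - 1) - 1)"

lemma dbig_pos: "1 < a \<Longrightarrow> 0 < dbig a"
proof -
  assume a: "1 < a"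
  have "2 powr 0 < 2 powr (a - 1)" using a by (intro powr_less_mono) auto
  then show ?thesis using a by (simp add: dbig_def)
qed

lemma sep_big_lip:
  fixes a L :: real and x x' s s' :: int
  assumes a: "1 < a" "a < 2" and L: "1 \<le> L" and xx: "x < x'" "0 < x * x'"
    and b: "2 * L \<le> \<bar>x\<bar>" "2 * L \<le> \<bar>x'\<bar>" "\<bar>s\<bar> \<le> L" "\<bar>s'\<bar> \<le> L" "\<bar>s' - s\<bar> = x' - x"
  shows "dbig a * real_of_int (x' - x) \<le> \<bar>ph a x' - ph a x\<bar> - \<bar>ph a s' - ph a s\<bar>"
proof -
  have A: "a * (2 * L) powr (a - 1) * real_of_int (x' - x) \<le> \<bar>ph a x' - ph a x\<bar>"
    using ph_mono_diff[OF a(1), of "2 * L" x x'] L xx b by auto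
  have B: "\<bar>ph a s' - ph a s\<bar> \<le> a * L powr (a - 1) * \<bar>real_of_int s' - real_of_int s\<bar>"
    using pow_lip[OF a(1), of "real_of_int s'" L "real_of_int s"] b by (simp add: ph_def)
  have B': "\<bar>real_of_int s' - real_of_int s\<bar> = real_of_int (x' - x)" using b by linarith
  have P: "(2 * L) powr (a - 1) = 2 powr (a - 1) * L powr (a - 1)" using L by (simp add: powr_mult)
  have L1: "1 \<le> L powr (a - 1)" using L a by (simp add: ge_one_powr_ge_zero)
  have d0: "0 \<le> real_of_int (x' - x)" using xx by simp
  have g: "0 \<le> 2 powr (a - 1) - 1" using a by (simp add: ge_one_powr_ge_zero)
  have "dbig a * real_of_int (x' - x) \<le> a * (2 powr (a - 1) - 1) * L powr (a - 1) * real_of_int (x' - x)"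
  proof -
    have "real_of_int (x' - x) \<le> L powr (a - 1) * real_of_int (x' - x)"
      using mult_right_mono[OF L1 d0] by simp
    then have "a * (2 powr (a - 1) - 1) * real_of_int (x' - x) \<le> a * (2 powr (a - 1) - 1) * (L powr (a - 1) * real_of_int (x' - x))"
      using g a by (intro mult_left_mono) auto
    then show ?thesis by (simp add: dbig_def mult.assoc)
  qed
  also have "\<dots> = a * (2 * L) powr (a - 1) * real_of_int (x' - x) - a * L powr (a - 1) * real_of_int (x' - x)"
    unfolding P by (simp add: algebra_simps)
  finally have F: "dbig a * real_of_int (x' - x) \<le> a * (2 * L) powr (a - 1) * real_of_int (x' - x) - a * L powr (a - 1) * real_of_int (x' - x)" .
  have B2: "\<bar>ph a s' - ph a s\<bar> \<le> a * L powr (a - 1) * real_of_int (x' - x)" using B unfolding B' .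
  show ?thesis using F A B2 by linarith
qed

lemma sep_big_sum:
  fixes a :: real and x x' e :: int
  assumes a: "1 < a" and xx: "x < x'" "0 < x * x'" and b: "1 \<le> \<bar>x\<bar>" "1 \<le> \<bar>x'\<bar>"
    and y: "x * (e - x) < 0" "x' * (e - x') < 0"
  shows "a * real_of_int (x' - x) \<le> \<bar>(ph a x' + ph a (e - x')) - (ph a x + ph a (e - x))\<bar>"
proof -
  have A: "a * 1 powr (a - 1) * real_of_int (x' - x) \<le> \<bar>ph a x' - ph a x\<bar>"
    using ph_mono_diff[OF a, of 1 x x'] xx b by auto
  show ?thesis
  proof (cases "0 < x")
    case True
    then have "0 < x'" using xx by auto
    have "e - x' < 0" "e - x < 0" using y True \<open>0 < x'\<close> by (auto simp: mult_less_0_iff)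
    then have "\<bar>e - x\<bar> \<le> \<bar>e - x'\<bar>" using xx by auto
    then have "ph a (e - x) \<le> ph a (e - x')" unfolding ph_def using a by (intro powr_mono2) auto
    moreover have "ph a x \<le> ph a x'" unfolding ph_def using a True xx by (intro powr_mono2) auto
    ultimately show ?thesis using A by auto
  next
    case False
    then have "x < 0" "x' < 0" using xx by (auto simp: zero_less_mult_iff)
    have "0 < e - x'" "0 < e - x" using y \<open>x < 0\<close> \<open>x' < 0\<close> by (auto simp: mult_less_0_iff)
    then have "\<bar>e - x'\<bar> \<le> \<bar>e - x\<bar>" using xx by auto
    then have "ph a (e - x') \<le> ph a (e - x)" unfolding ph_def using a by (intro powr_mono2) auto
    moreover have "ph a x' \<le> ph a x" unfolding ph_def using a \<open>x < 0\<close> \<open>x' < 0\<close> xx by (intro powr_mono2) auto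
    ultimately show ?thesis using A by auto
  qed
qed


lemma count1:
  fixes F :: "'a set" and h :: "'a \<Rightarrow> int" and f :: "'a \<Rightarrow> real"
  assumes fin: "finite F" and inj: "inj_on h F" and d: "0 < \<delta>" and C: "0 \<le> C0"
    and sep: "\<And>r r'. r \<in> F \<Longrightarrow> r' \<in> F \<Longrightarrow> h r < h r' \<Longrightarrow> \<delta> * real_of_int (h r' - h r) \<le> \<bar>f r' - f r\<bar>"
    and win: "\<And>r. r \<in> F \<Longrightarrow> \<bar>f r - m\<bar> \<le> C0"
  shows "real (card F) \<le> 2 * C0 / \<delta> + 1"
proof (cases "F = {}")
  case True then show ?thesis using C d by simp
next
  case False
  define lo where "lo = Min (h ` F)"
  define hi where "hi = Max (h ` F)"
  have fi: "finite (h ` F)" using fin by simp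
  have ne: "h ` F \<noteq> {}" using False by simp
  obtain r1 where r1: "r1 \<in> F" "h r1 = lo" using Min_in[OF fi ne] lo_def by auto
  obtain r2 where r2: "r2 \<in> F" "h r2 = hi" using Max_in[OF fi ne] hi_def by auto
  have sub: "h ` F \<subseteq> {lo..hi}" using fi lo_def hi_def by auto
  have "card F = card (h ` F)" using inj by (simp add: card_image)
  also have "\<dots> \<le> card {lo..hi}" using sub by (intro card_mono) auto
  finally have c1: "real (card F) \<le> real_of_int (hi - lo) + 1"
    using r1 r2 sub by (cases "lo \<le> hi") auto
  have "real_of_int (hi - lo) \<le> 2 * C0 / \<delta>"
  proof (cases "lo < hi")
    case True
    have "\<delta> * real_of_int (hi - lo) \<le> \<bar>f r2 - f r1\<bar>" using sep[OF r1(1) r2(1)] r1 r2 True by auto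
    also have "\<dots> \<le> 2 * C0" using win[OF r1(1)] win[OF r2(1)] by linarith
    finally show ?thesis using d by (simp add: field_simps)
  next
    case False
    have "0 \<le> 2 * C0 / \<delta>" using C d by simp
    then show ?thesis using False by linarith
  qed
  then show ?thesis using c1 by linarith
qed

lemma count2:
  fixes F :: "'a set" and h :: "'a \<Rightarrow> int" and f :: "'a \<Rightarrow> real"
  assumes fin: "finite F" and inj: "inj_on h F" and d: "0 < \<delta>" and C: "0 \<le> C0"
    and sep: "\<And>r r'. r \<in> F \<Longrightarrow> r' \<in> F \<Longrightarrow> h r < h r' \<Longrightarrow> 0 < h r * h r' \<Longrightarrow>
       \<delta> * real_of_int (h r' - h r) \<le> \<bar>f r' - f r\<bar>"
    and win: "\<And>r. r \<in> F \<Longrightarrow> \<bar>f r - m\<bar> \<le> C0"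
  shows "real (card F) \<le> 2 * (2 * C0 / \<delta> + 1) + 1"
proof -
  define Fp where "Fp = {r \<in> F. 0 < h r}"
  define Fn where "Fn = {r \<in> F. h r < 0}"
  define F0 where "F0 = {r \<in> F. h r = 0}"
  have FF: "F = Fp \<union> Fn \<union> F0" by (auto simp: Fp_def Fn_def F0_def)
  have cp: "real (card Fp) \<le> 2 * C0 / \<delta> + 1"
    by (rule count1[where h=h and f=f and m=m]) (use fin inj d C sep win in \<open>auto simp: Fp_def intro: inj_on_subset\<close>)
  have cn: "real (card Fn) \<le> 2 * C0 / \<delta> + 1"
  proof (rule count1[where h=h and f=f and m=m])
    show "\<And>r r'. r \<in> Fn \<Longrightarrow> r' \<in> Fn \<Longrightarrow> h r < h r' \<Longrightarrow> \<delta> * real_of_int (h r' - h r) \<le> \<bar>f r' - f r\<bar>"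
      using sep by (auto simp: Fn_def mult_neg_neg)
  qed (use fin inj d C win in \<open>auto simp: Fn_def intro: inj_on_subset\<close>)
  have c0: "card F0 \<le> 1"
  proof -
    have "inj_on h F0" using inj by (auto simp: F0_def intro: inj_on_subset)
    then have "card F0 = card (h ` F0)" by (simp add: card_image)
    also have "\<dots> \<le> card {0::int}" by (intro card_mono) (auto simp: F0_def)
    finally show ?thesis by simp
  qed
  have "card F \<le> card Fp + card Fn + card F0"
    unfolding FF by (metis card_Un_le add_le_mono le_trans order_refl)
  then have "real (card F) \<le> real (card Fp) + real (card Fn) + real (card F0)" by linarith
  moreover have "real (card F0) \<le> 1" using c0 by simp
  ultimately show ?thesis using cp cn by argo
qed

lemma fiber_card:
  fixes F :: "'a set" and g :: "'a \<Rightarrow> 'b"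
  assumes "finite Y" "g ` F \<subseteq> Y"
  shows "card F \<le> (\<Sum>y\<in>Y. card {r \<in> F. g r = y})"
proof -
  have "F = (\<Union>y\<in>Y. {r \<in> F. g r = y})" using assms by auto
  then have "card F = card (\<Union>y\<in>Y. {r \<in> F. g r = y})" by simp
  also have "\<dots> \<le> (\<Sum>y\<in>Y. card {r \<in> F. g r = y})" by (rule card_UN_le[OF assms(1)])
  finally show ?thesis .
qed

lemma harm_sym: "(\<Sum>z\<in>{- int M..int M}. 1 / real_of_int \<bar>z\<bar>) = 2 * harm M"
proof (induction M)
  case 0 then show ?case by (simp add: harm_expand)
next
  case (Suc M)
  have e: "{- int (Suc M)..int (Suc M)} = insert (- int (Suc M)) (insert (int (Suc M)) {- int M..int M})" by auto
  show ?case unfolding e using Suc by (simp add: harm_Suc field_simps)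
qed

lemma harm_shift: "(\<Sum>y\<in>{a - int M..a + int M}. 1 / real_of_int \<bar>y - a\<bar>) = 2 * harm M"
proof -
  have "(\<Sum>y\<in>{a - int M..a + int M}. 1 / real_of_int \<bar>y - a\<bar>) = (\<Sum>z\<in>{- int M..int M}. 1 / real_of_int \<bar>z\<bar>)"
    by (rule sum.reindex_bij_witness[of _ "\<lambda>z. z + a" "\<lambda>y. y - a"]) auto
  then show ?thesis using harm_sym by simp
qed

lemma harm_sub:
  assumes "Y \<subseteq> {a - int M..a + int M}"
  shows "(\<Sum>y\<in>Y. 1 / real_of_int \<bar>y - a\<bar>) \<le> 2 * harm M"
proof -
  have "(\<Sum>y\<in>Y. 1 / real_of_int \<bar>y - a\<bar>) \<le> (\<Sum>y\<in>{a - int M..a + int M}. 1 / real_of_int \<bar>y - a\<bar>)"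
    using assms by (intro sum_mono2) auto
  then show ?thesis using harm_shift by simp
qed


definition Phi :: "real \<Rightarrow> idx4 \<Rightarrow> real" where
  "Phi a r = (case r of (k, k1, k2, k3) \<Rightarrow> ph a k1 - ph a k2 + ph a k3 - ph a k)"

lemma mem_resS:
  "(k, k1, k2, k3) \<in> resS a C0 m N N1 N2 N3 \<longleftrightarrow>
    k = k1 - k2 + k3 \<and> k2 \<noteq> k1 \<and> k2 \<noteq> k3 \<and> \<bar>Phi a (k, k1, k2, k3) - m\<bar> \<le> C0 \<and>
    \<bar>k\<bar> \<le> int N \<and> \<bar>k1\<bar> \<le> int N1 \<and> \<bar>k2\<bar> \<le> int N2 \<and> \<bar>k3\<bar> \<le> int N3"
  unfolding resS_def Phi_def ph_def by (simp only: mem_Collect_eq case_prod_conv split_def fst_conv snd_conv)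

lemma finite_resS: "finite (resS a C0 m N N1 N2 N3)"
proof -
  have "resS a C0 m N N1 N2 N3 \<subseteq> {- int N..int N} \<times> {- int N1..int N1} \<times> {- int N2..int N2} \<times> {- int N3..int N3}"
  proof
    fix x assume x: "x \<in> resS a C0 m N N1 N2 N3"
    obtain k k1 k2 k3 where xe: "x = (k, k1, k2, k3)" by (cases x) auto
    show "x \<in> {- int N..int N} \<times> {- int N1..int N1} \<times> {- int N2..int N2} \<times> {- int N3..int N3}"
      using x unfolding xe mem_resS by (simp add: abs_le_iff)
  qed
  then show ?thesis by (rule finite_subset) simp
qed

lemma finite_Bset: "finite (Bset a C0 m N N1 N2 N3 js G)"
  using finite_resS by (auto simp: Bset_def)

lemma fiber_small:
  fixes F :: "idx4 set" and h :: "idx4 \<Rightarrow> int" and R K s :: real and c :: int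
  assumes a: "1 < a" "a < 2" and C: "0 \<le> C0" and fin: "finite F" and inj: "inj_on h F"
    and c: "c \<noteq> 0" and R: "1 \<le> R"
    and bnd: "\<And>r. r \<in> F \<Longrightarrow> \<bar>h r\<bar> \<le> R \<and> \<bar>h r + c\<bar> \<le> R"
    and form: "\<And>r. r \<in> F \<Longrightarrow> Phi a r = K + s * (ph a (h r) - ph a (h r + c))"
    and s: "\<bar>s\<bar> = 1"
    and win: "\<And>r. r \<in> F \<Longrightarrow> \<bar>Phi a r - m\<bar> \<le> C0"
  shows "real (card F) \<le> 2 * C0 / (real_of_int \<bar>c\<bar> * kap a * R powr (a - 2)) + 1"
proof (rule count1[OF fin inj _ C _ win])
  show "0 < real_of_int \<bar>c\<bar> * kap a * R powr (a - 2)" using c kap_pos[OF a(1)] R by auto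
next
  fix r r' assume r: "r \<in> F" "r' \<in> F" "h r < h r'"
  have "real_of_int \<bar>c\<bar> * kap a * R powr (a - 2) * real_of_int (h r' - h r)
     \<le> \<bar>(ph a (h r') - ph a (h r' + c)) - (ph a (h r) - ph a (h r + c))\<bar>"
    using sep_small[OF a R r(3)] bnd[OF r(1)] bnd[OF r(2)] by auto
  also have "\<dots> = \<bar>Phi a r' - Phi a r\<bar>"
  proof -
    have "Phi a r' - Phi a r = s * ((ph a (h r') - ph a (h r' + c)) - (ph a (h r) - ph a (h r + c)))"
      using form[OF r(1)] form[OF r(2)] by (simp add: algebra_simps)
    then show ?thesis using s by (simp add: abs_mult)
  qed
  finally show "real_of_int \<bar>c\<bar> * kap a * R powr (a - 2) * real_of_int (h r' - h r) \<le> \<bar>Phi a r' - Phi a r\<bar>" .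
qed

lemma fiber_big_lip:
  fixes F :: "idx4 set" and h p :: "idx4 \<Rightarrow> int" and L K sa sb :: real and e sc :: int
  assumes a: "1 < a" "a < 2" and C: "0 \<le> C0" and fin: "finite F" and inj: "inj_on h F"
    and L: "1 \<le> L"
    and bnd: "\<And>r. r \<in> F \<Longrightarrow> 2 * L \<le> \<bar>h r\<bar> \<and> \<bar>p r\<bar> \<le> L"
    and pp: "\<And>r. r \<in> F \<Longrightarrow> p r = e + sc * h r" and sc: "\<bar>sc\<bar> = 1"
    and form: "\<And>r. r \<in> F \<Longrightarrow> Phi a r = K + sa * ph a (h r) + sb * ph a (p r)"
    and s: "\<bar>sa\<bar> = 1" "\<bar>sb\<bar> = 1"
    and win: "\<And>r. r \<in> F \<Longrightarrow> \<bar>Phi a r - m\<bar> \<le> C0"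
  shows "real (card F) \<le> 2 * (2 * C0 / dbig a + 1) + 1"
proof (rule count2[OF fin inj dbig_pos[OF a(1)] C _ win])
  fix r r' assume r: "r \<in> F" "r' \<in> F" "h r < h r'" "0 < h r * h r'"
  have ps: "\<bar>p r' - p r\<bar> = h r' - h r"
  proof -
    have "sc = 1 \<or> sc = -1" using sc by linarith
    then show ?thesis using pp[OF r(1)] pp[OF r(2)] r(3) by (auto simp: algebra_simps)
  qed
  have "dbig a * real_of_int (h r' - h r) \<le> \<bar>ph a (h r') - ph a (h r)\<bar> - \<bar>ph a (p r') - ph a (p r)\<bar>"
    using sep_big_lip[OF a L r(3) r(4)] bnd[OF r(1)] bnd[OF r(2)] ps by auto
  also have "\<dots> \<le> \<bar>Phi a r' - Phi a r\<bar>"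
  proof -
    have "Phi a r' - Phi a r = sa * (ph a (h r') - ph a (h r)) + sb * (ph a (p r') - ph a (p r))"
      using form[OF r(1)] form[OF r(2)] by (simp add: algebra_simps)
    moreover have "\<bar>sa * (ph a (h r') - ph a (h r))\<bar> = \<bar>ph a (h r') - ph a (h r)\<bar>" using s by (simp add: abs_mult)
    moreover have "\<bar>sb * (ph a (p r') - ph a (p r))\<bar> = \<bar>ph a (p r') - ph a (p r)\<bar>" using s by (simp add: abs_mult)
    ultimately show ?thesis by linarith
  qed
  finally show "dbig a * real_of_int (h r' - h r) \<le> \<bar>Phi a r' - Phi a r\<bar>" .
qed

lemma fiber_big_sum:
  fixes F :: "idx4 set" and h :: "idx4 \<Rightarrow> int"
  assumes a: "1 < a" and C: "0 \<le> C0" and fin: "finite F" and inj: "inj_on h F"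
    and bnd: "\<And>r. r \<in> F \<Longrightarrow> 1 \<le> \<bar>h r\<bar> \<and> h r * (e - h r) < 0"
    and form: "\<And>r. r \<in> F \<Longrightarrow> Phi a r = K - ph a (h r) - ph a (e - h r)"
    and win: "\<And>r. r \<in> F \<Longrightarrow> \<bar>Phi a r - m\<bar> \<le> C0"
  shows "real (card F) \<le> 2 * (2 * C0 / a + 1) + 1"
proof (rule count2[OF fin inj _ C _ win])
  show "0 < a" using a by simp
next
  fix r r' assume r: "r \<in> F" "r' \<in> F" "h r < h r'" "0 < h r * h r'"
  have "a * real_of_int (h r' - h r) \<le> \<bar>(ph a (h r') + ph a (e - h r')) - (ph a (h r) + ph a (e - h r))\<bar>"
    using sep_big_sum[OF a r(3) r(4)] bnd[OF r(1)] bnd[OF r(2)] by auto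
  also have "\<dots> = \<bar>Phi a r' - Phi a r\<bar>"
  proof -
    have "Phi a r' - Phi a r = - ((ph a (h r') + ph a (e - h r')) - (ph a (h r) + ph a (e - h r)))"
      using form[OF r(1)] form[OF r(2)] by (simp add: algebra_simps)
    then show ?thesis by simp
  qed
  finally show "a * real_of_int (h r' - h r) \<le> \<bar>Phi a r' - Phi a r\<bar>" .
qed

lemma small_sum:
  fixes F :: "'x set" and g :: "'x \<Rightarrow> int"
  assumes a: "1 < a" "a < 2" and Y: "finite Y" "Y \<subseteq> {y0 - int M..y0 + int M}" and gF: "g ` F \<subseteq> Y"
    and B: "0 \<le> B"
    and fib: "\<And>y. y \<in> Y \<Longrightarrow> real (card {r \<in> F. g r = y}) \<le> 1 + B / real_of_int \<bar>y - y0\<bar>"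
  shows "real (card F) \<le> real (card Y) + B * 2 * (real M powr (a - 1) / (a - 1))"
proof -
  have "real (card F) \<le> real (\<Sum>y\<in>Y. card {r \<in> F. g r = y})"
    using fiber_card[OF Y(1) gF] by linarith
  also have "\<dots> = (\<Sum>y\<in>Y. real (card {r \<in> F. g r = y}))" by simp
  also have "\<dots> \<le> (\<Sum>y\<in>Y. 1 + B * (1 / real_of_int \<bar>y - y0\<bar>))"
    using fib by (intro sum_mono) simp
  also have "\<dots> = real (card Y) + B * (\<Sum>y\<in>Y. 1 / real_of_int \<bar>y - y0\<bar>)"
    by (simp add: sum.distrib sum_distrib_left)
  also have "\<dots> \<le> real (card Y) + B * (2 * harm M)"
    using harm_sub[OF Y(2)] B by (intro add_left_mono mult_left_mono) auto
  also have "\<dots> \<le> real (card Y) + B * (2 * (real M powr (a - 1) / (a - 1)))"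
    using harm_powr_bound[of "a - 1" M] a B by (intro add_left_mono mult_left_mono) auto
  finally show ?thesis by (simp add: mult.assoc)
qed


lemma small_case:
  fixes F :: "idx4 set" and g h :: "idx4 \<Rightarrow> int" and Y :: "int set" and c :: "int \<Rightarrow> int"
    and K s :: "int \<Rightarrow> real" and Ln :: nat and al C0 m :: real
  assumes al: "1 < al" "al < 2" and C: "0 \<le> C0" and fin: "finite F" and Ln: "1 \<le> Ln"
    and Y: "finite Y" "real (card Y) \<le> 7 * real Ln" "Y \<subseteq> {yz - int (4*Ln) .. yz + int (4*Ln)}"
    and gF: "g ` F \<subseteq> Y"
    and empty: "\<And>r. r \<in> F \<Longrightarrow> g r \<noteq> yz"
    and inj: "\<And>y. inj_on h {r \<in> F. g r = y}"
    and bnd: "\<And>r. r \<in> F \<Longrightarrow> \<bar>h r\<bar> \<le> int (4*Ln) \<and> \<bar>h r + c (g r)\<bar> \<le> int (4*Ln)"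
    and cabs: "\<And>y. \<bar>c y\<bar> = \<bar>y - yz\<bar>"
    and form: "\<And>r. r \<in> F \<Longrightarrow> Phi al r = K (g r) + s (g r) * (ph al (h r) - ph al (h r + c (g r)))"
    and s: "\<And>y. \<bar>s y\<bar> = 1"
    and win: "\<And>r. r \<in> F \<Longrightarrow> \<bar>Phi al r - m\<bar> \<le> C0"
  shows "real (card F) \<le> (7 + 16 * C0 / (kap al * (al - 1))) * real Ln"
proof -
  define R where "R = 4 * real Ln"
  have R1: "1 \<le> R" using Ln by (simp add: R_def)
  have kp: "0 < kap al" using kap_pos al by auto
  define Bc where "Bc = 2 * C0 / (kap al * R powr (al - 2))"
  have Bc0: "0 \<le> Bc" using C kp R1 by (simp add: Bc_def)
  have main: "real (card F) \<le> real (card Y) + Bc * 2 * (real (4*Ln) powr (al - 1) / (al - 1))"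
  proof (rule small_sum[OF al Y(1) Y(3) gF Bc0])
    fix y assume yY: "y \<in> Y"
    show "real (card {r \<in> F. g r = y}) \<le> 1 + Bc / real_of_int \<bar>y - yz\<bar>"
    proof (cases "y = yz")
      case True
      have E: "{r \<in> F. g r = y} = {}" using empty True by blast
      show ?thesis unfolding E using True by simp
    next
      case False
      have cne: "c y \<noteq> 0" using cabs[of y] False by auto
      have "real (card {r \<in> F. g r = y}) \<le> 2 * C0 / (real_of_int \<bar>c y\<bar> * kap al * R powr (al - 2)) + 1"
      proof (rule fiber_small[OF al C _ inj cne R1, where K="K y" and s="s y" and m=m])
        show "finite {r \<in> F. g r = y}" using fin by simp
        show "\<And>r. r \<in> {r \<in> F. g r = y} \<Longrightarrow> real_of_int \<bar>h r\<bar> \<le> R \<and> real_of_int \<bar>h r + c y\<bar> \<le> R"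
        proof -
          fix r assume "r \<in> {r \<in> F. g r = y}"
          then have rF: "r \<in> F" and gr: "g r = y" by auto
          have "\<bar>h r\<bar> \<le> int (4*Ln) \<and> \<bar>h r + c y\<bar> \<le> int (4*Ln)" using bnd[OF rF] gr by simp
          then show "real_of_int \<bar>h r\<bar> \<le> R \<and> real_of_int \<bar>h r + c y\<bar> \<le> R"
            unfolding R_def by (metis of_int_le_iff of_int_of_nat_eq of_nat_mult of_nat_numeral)
        qed
        show "\<And>r. r \<in> {r \<in> F. g r = y} \<Longrightarrow> Phi al r = K y + s y * (ph al (h r) - ph al (h r + c y))"
          using form by blast
        show "\<bar>s y\<bar> = 1" by (rule s)
        show "\<And>r. r \<in> {r \<in> F. g r = y} \<Longrightarrow> \<bar>Phi al r - m\<bar> \<le> C0" using win by auto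
      qed
      also have "\<dots> = 1 + Bc / real_of_int \<bar>y - yz\<bar>"
        unfolding Bc_def using cabs[of y] by (simp add: field_simps)
      finally show ?thesis .
    qed
  qed
  have "Bc * 2 * (real (4*Ln) powr (al - 1) / (al - 1)) = 16 * C0 / (kap al * (al - 1)) * real Ln"
  proof -
    have e1: "R powr (al - 2 + 1) = R powr (al - 2) * R powr 1" by (rule powr_add)
    have "R powr (al - 1) = R powr (al - 2) * R" using e1 R1 by (simp add: diff_add_eq)
    moreover have "real (4*Ln) = R" by (simp add: R_def)
    moreover have "0 < R powr (al - 2)" using R1 by simp
    ultimately show ?thesis unfolding Bc_def using kp al by (simp add: R_def field_simps)
  qed
  then show ?thesis using main Y(2) by (simp add: algebra_simps)
qed

lemma big_case:
  fixes F :: "'x set" and g :: "'x \<Rightarrow> int" and Y :: "int set"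
  assumes Y: "finite Y" "real (card Y) \<le> 3 * L" and gF: "g ` F \<subseteq> Y" and P: "0 \<le> P"
    and fib: "\<And>y. y \<in> Y \<Longrightarrow> real (card {r \<in> F. g r = y}) \<le> P"
  shows "real (card F) \<le> 3 * L * P"
proof -
  have "real (card F) \<le> real (\<Sum>y\<in>Y. card {r \<in> F. g r = y})"
    using fiber_card[OF Y(1) gF] by linarith
  also have "\<dots> = (\<Sum>y\<in>Y. real (card {r \<in> F. g r = y}))" by simp
  also have "\<dots> \<le> (\<Sum>y\<in>Y. P)" using fib by (intro sum_mono) auto
  also have "\<dots> = real (card Y) * P" by simp
  also have "\<dots> \<le> 3 * L * P" using Y(2) P by (intro mult_right_mono) auto
  finally show ?thesis .
qed


lemma kcomp_simps[simp]: "kcomp 1 (k, k1, k2, k3) = k1" "kcomp 2 (k, k1, k2, k3) = k2" "kcomp 3 (k, k1, k2, k3) = k3"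
  by (simp_all add: kcomp_def)

lemma B_mem:
  assumes "(k, k1, k2, k3) \<in> Bset al C0 m N N1 N2 N3 js G"
  shows "k = k1 - k2 + k3 \<and> k2 \<noteq> k1 \<and> k2 \<noteq> k3 \<and> \<bar>Phi al (k, k1, k2, k3) - m\<bar> \<le> C0 \<and>
    \<bar>k\<bar> \<le> int N \<and> \<bar>k1\<bar> \<le> int N1 \<and> \<bar>k2\<bar> \<le> int N2 \<and> \<bar>k3\<bar> \<le> int N3 \<and>
    real_of_int \<bar>kcomp js (k, k1, k2, k3)\<bar> \<le> G \<and> G < real_of_int \<bar>k\<bar>"
proof -
  have 1: "(k, k1, k2, k3) \<in> resS al C0 m N N1 N2 N3" and 2: "real_of_int \<bar>kcomp js (k, k1, k2, k3)\<bar> \<le> G"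
    and 3: "G < real_of_int \<bar>k\<bar>" using assms unfolding Bset_def by auto
  have "k = k1 - k2 + k3 \<and> k2 \<noteq> k1 \<and> k2 \<noteq> k3 \<and> \<bar>Phi al (k, k1, k2, k3) - m\<bar> \<le> C0 \<and>
    \<bar>k\<bar> \<le> int N \<and> \<bar>k1\<bar> \<le> int N1 \<and> \<bar>k2\<bar> \<le> int N2 \<and> \<bar>k3\<bar> \<le> int N3" using 1[unfolded mem_resS] .
  then show ?thesis using 2 3 by blast
qed

definition Ks :: "real \<Rightarrow> real \<Rightarrow> real" where "Ks al C0 = 7 + 16 * C0 / (kap al * (al - 1))"
definition Pb :: "real \<Rightarrow> real \<Rightarrow> real" where
  "Pb al C0 = (2 * (2 * C0 / dbig al + 1) + 1) + (2 * (2 * C0 / al + 1) + 1)"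
definition Kc :: "real \<Rightarrow> real \<Rightarrow> real" where "Kc al C0 = Ks al C0 + 3 * Pb al C0"

lemma consts_pos:
  assumes "1 < al" "0 \<le> C0"
  shows "0 \<le> Ks al C0" "0 \<le> 2 * C0 / dbig al" "0 \<le> 2 * C0 / al" "0 \<le> Pb al C0"
    "Ks al C0 \<le> Kc al C0"
    "2 * (2 * C0 / dbig al + 1) + 1 \<le> Pb al C0" "2 * (2 * C0 / al + 1) + 1 \<le> Pb al C0"
proof -
  have k: "0 < kap al" "0 < dbig al" using kap_pos dbig_pos assms by auto
  show a: "0 \<le> Ks al C0" unfolding Ks_def using k assms by simp
  show b: "0 \<le> 2 * C0 / dbig al" using k assms by simp
  show c: "0 \<le> 2 * C0 / al" using assms by simp
  show "0 \<le> Pb al C0" unfolding Pb_def using b c by simp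
  then show "Ks al C0 \<le> Kc al C0" unfolding Kc_def by simp
  show "2 * (2 * C0 / dbig al + 1) + 1 \<le> Pb al C0" unfolding Pb_def using c by simp
  show "2 * (2 * C0 / al + 1) + 1 \<le> Pb al C0" unfolding Pb_def using b by simp
qed

lemma Rw_mem:
  assumes "(k, k1, k2, k3) \<in> {r \<in> Bset al C0 m N N1 N2 N3 js G. kcomp j r = a0}"
  shows "kcomp j (k, k1, k2, k3) = a0 \<and> k = k1 - k2 + k3 \<and> k2 \<noteq> k1 \<and> k2 \<noteq> k3 \<and> \<bar>Phi al (k, k1, k2, k3) - m\<bar> \<le> C0 \<and>
    \<bar>k\<bar> \<le> int N \<and> \<bar>k1\<bar> \<le> int N1 \<and> \<bar>k2\<bar> \<le> int N2 \<and> \<bar>k3\<bar> \<le> int N3 \<and>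
    real_of_int \<bar>kcomp js (k, k1, k2, k3)\<bar> \<le> G \<and> G < real_of_int \<bar>k\<bar>"
proof -
  have "(k, k1, k2, k3) \<in> Bset al C0 m N N1 N2 N3 js G" "kcomp j (k, k1, k2, k3) = a0" using assms by auto
  then show ?thesis using B_mem[of k k1 k2 k3 al C0 m N N1 N2 N3 js G] by blast
qed

context
  fixes al C0 m G :: real and N N1 N2 N3 :: nat
  assumes al: "1 < al" "al < 2" and C0: "0 < C0"
    and N: "1 \<le> N2" "1 \<le> N3" "N2 \<le> N1" "N3 \<le> N1"
begin

lemma js1_row1:
  "real (card {r \<in> Bset al C0 m N N1 N2 N3 1 G. kcomp 1 r = a0}) \<le> Kc al C0 * real (N2 + N3)"
proof -
  define F where "F = {r \<in> Bset al C0 m N N1 N2 N3 1 G. kcomp 1 r = a0}"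
  define Ln where "Ln = N2 + N3"
  have Ln1: "1 \<le> Ln" using N by (simp add: Ln_def)
  have fin: "finite F" unfolding F_def using finite_Bset by simp
  have FM: "\<And>k k1 k2 k3. (k, k1, k2, k3) \<in> F \<Longrightarrow> k1 = a0 \<and> k = k1 - k2 + k3 \<and> k2 \<noteq> k1 \<and> k2 \<noteq> k3 \<and> \<bar>Phi al (k, k1, k2, k3) - m\<bar> \<le> C0 \<and>
    \<bar>k\<bar> \<le> int N \<and> \<bar>k1\<bar> \<le> int N1 \<and> \<bar>k2\<bar> \<le> int N2 \<and> \<bar>k3\<bar> \<le> int N3 \<and>
    real_of_int \<bar>k1\<bar> \<le> G \<and> G < real_of_int \<bar>k\<bar>"
  proof -
    fix k k1 k2 k3 assume "(k, k1, k2, k3) \<in> F"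
    from Rw_mem[OF this[unfolded F_def]] show "?thesis k k1 k2 k3" by (auto simp: kcomp_def)
  qed
  have "real (card F) \<le> Ks al C0 * real Ln"
    unfolding Ks_def
  proof (rule small_case[OF al _ fin Ln1, where g=fst and h="kcomp 3" and c="\<lambda>y. a0 - y"
        and K="\<lambda>y. ph al a0 - ph al y" and s="\<lambda>y. 1" and yz=a0 and m=m and Y="{a0 - int Ln..a0 + int Ln}"])
    show "0 \<le> C0" using C0 by simp
    show "finite {a0 - int Ln..a0 + int Ln}" by simp
    show "real (card {a0 - int Ln..a0 + int Ln}) \<le> 7 * real Ln" using Ln1 by simp
    show "{a0 - int Ln..a0 + int Ln} \<subseteq> {a0 - int (4 * Ln)..a0 + int (4 * Ln)}" by auto
    show "fst ` F \<subseteq> {a0 - int Ln..a0 + int Ln}"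
    proof
      fix y assume "y \<in> fst ` F"
      then obtain k k1 k2 k3 where r: "(k, k1, k2, k3) \<in> F" "y = k" by force
      have "k1 = a0" "k = k1 - k2 + k3" "\<bar>k2\<bar> \<le> int N2" "\<bar>k3\<bar> \<le> int N3" using FM[OF r(1)] by auto
      then show "y \<in> {a0 - int Ln..a0 + int Ln}" using r(2) by (simp add: Ln_def abs_le_iff)
    qed
    show "\<And>r. r \<in> F \<Longrightarrow> fst r \<noteq> a0"
    proof -
      fix r assume rF: "r \<in> F"
      obtain k k1 k2 k3 where re: "r = (k, k1, k2, k3)" by (cases r)
      have "k1 = a0" "real_of_int \<bar>k1\<bar> \<le> G" "G < real_of_int \<bar>k\<bar>" using FM rF re by auto
      then show "fst r \<noteq> a0" using re by auto
    qed
    show "\<And>y. inj_on (kcomp 3) {r \<in> F. fst r = y}"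
    proof (intro inj_onI)
      fix y r r' assume A: "r \<in> {r \<in> F. fst r = y}" "r' \<in> {r \<in> F. fst r = y}" "kcomp 3 r = kcomp 3 r'"
      obtain k k1 k2 k3 where re: "r = (k, k1, k2, k3)" by (cases r)
      obtain k' k1' k2' k3' where re': "r' = (k', k1', k2', k3')" by (cases r')
      have "k1 = a0" "k = k1 - k2 + k3" "k = y" using FM A re by auto
      moreover have "k1' = a0" "k' = k1' - k2' + k3'" "k' = y" using FM A re' by auto
      moreover have "k3 = k3'" using A re re' by simp
      ultimately show "r = r'" using re re' by simp
    qed
    show "\<And>r. r \<in> F \<Longrightarrow> \<bar>kcomp 3 r\<bar> \<le> int (4 * Ln) \<and> \<bar>kcomp 3 r + (a0 - fst r)\<bar> \<le> int (4 * Ln)"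
    proof -
      fix r assume rF: "r \<in> F"
      obtain k k1 k2 k3 where re: "r = (k, k1, k2, k3)" by (cases r)
      have "k1 = a0" "k = k1 - k2 + k3" "\<bar>k2\<bar> \<le> int N2" "\<bar>k3\<bar> \<le> int N3" using FM rF re by auto
      then show "\<bar>kcomp 3 r\<bar> \<le> int (4 * Ln) \<and> \<bar>kcomp 3 r + (a0 - fst r)\<bar> \<le> int (4 * Ln)"
        using re by (simp add: Ln_def)
    qed
    show "\<And>y. \<bar>a0 - y\<bar> = \<bar>y - a0\<bar>" by simp
    show "\<And>r. r \<in> F \<Longrightarrow> Phi al r = ph al a0 - ph al (fst r) + 1 * (ph al (kcomp 3 r) - ph al (kcomp 3 r + (a0 - fst r)))"
    proof -
      fix r assume rF: "r \<in> F"
      obtain k k1 k2 k3 where re: "r = (k, k1, k2, k3)" by (cases r)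
      have "k1 = a0" "k = k1 - k2 + k3" using FM rF re by auto
      then have "k3 + (a0 - k) = k2" by simp
      then show "Phi al r = ph al a0 - ph al (fst r) + 1 * (ph al (kcomp 3 r) - ph al (kcomp 3 r + (a0 - fst r)))"
        using re \<open>k1 = a0\<close> by (simp add: Phi_def)
    qed
    show "\<And>y. \<bar>1::real\<bar> = 1" by simp
    show "\<And>r. r \<in> F \<Longrightarrow> \<bar>Phi al r - m\<bar> \<le> C0"
    proof -
      fix r assume rF: "r \<in> F"
      obtain k k1 k2 k3 where re: "r = (k, k1, k2, k3)" by (cases r)
      show "\<bar>Phi al r - m\<bar> \<le> C0" using FM rF re by auto
    qed
  qed
  also have "\<dots> \<le> Kc al C0 * real Ln"
    using consts_pos[of al C0] al C0 by (intro mult_right_mono) auto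
  finally show ?thesis unfolding F_def Ln_def .
qed

end

lemma kcomp_Suc0[simp]: "kcomp (Suc 0) (k, k1, k2, k3) = k1" by (simp add: kcomp_def)

lemma Yshell:
  fixes G :: real and Ln :: nat
  shows "finite {y::int. G < real_of_int \<bar>y\<bar> \<and> real_of_int \<bar>y\<bar> \<le> G + real Ln}"
    "real (card {y::int. G < real_of_int \<bar>y\<bar> \<and> real_of_int \<bar>y\<bar> \<le> G + real Ln}) \<le> 2 * real Ln"
proof -
  define f where "f = \<lfloor>G\<rfloor>"
  have sub: "{y::int. G < real_of_int \<bar>y\<bar> \<and> real_of_int \<bar>y\<bar> \<le> G + real Ln}
      \<subseteq> {- (f + int Ln)..- (f + 1)} \<union> {f + 1..f + int Ln}"
  proof
    fix y :: int assume "y \<in> {y::int. G < real_of_int \<bar>y\<bar> \<and> real_of_int \<bar>y\<bar> \<le> G + real Ln}"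
    then have y: "G < real_of_int \<bar>y\<bar>" "real_of_int \<bar>y\<bar> \<le> G + real Ln" by auto
    have "f + 1 \<le> \<bar>y\<bar>" using y(1) unfolding f_def by linarith
    moreover have "\<bar>y\<bar> \<le> f + int Ln"
    proof -
      have "real_of_int \<bar>y\<bar> < real_of_int (f + 1) + real Ln" using y(2) unfolding f_def by linarith
      then show ?thesis by linarith
    qed
    ultimately show "y \<in> {- (f + int Ln)..- (f + 1)} \<union> {f + 1..f + int Ln}" by (auto simp: abs_if split: if_splits)
  qed
  show "finite {y::int. G < real_of_int \<bar>y\<bar> \<and> real_of_int \<bar>y\<bar> \<le> G + real Ln}"
    using sub by (rule finite_subset) auto
  have "card {y::int. G < real_of_int \<bar>y\<bar> \<and> real_of_int \<bar>y\<bar> \<le> G + real Ln}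
      \<le> card ({- (f + int Ln)..- (f + 1)} \<union> {f + 1..f + int Ln})"
    using sub by (intro card_mono) auto
  also have "\<dots> \<le> card {- (f + int Ln)..- (f + 1)} + card {f + 1..f + int Ln}" by (rule card_Un_le)
  also have "\<dots> \<le> 2 * Ln" by simp
  finally show "real (card {y::int. G < real_of_int \<bar>y\<bar> \<and> real_of_int \<bar>y\<bar> \<le> G + real Ln}) \<le> 2 * real Ln"
    by linarith
qed

context
  fixes al C0 m G :: real and N N1 N2 N3 :: nat
  assumes al: "1 < al" "al < 2" and C0: "0 < C0"
    and N: "1 \<le> N2" "1 \<le> N3" "N2 \<le> N1" "N3 \<le> N1"
begin

lemma js1_row2:
  "real (card {r \<in> Bset al C0 m N N1 N2 N3 1 G. kcomp 2 r = a0}) \<le> Kc al C0 * real (N2 + N3)"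
proof -
  define F where "F = {r \<in> Bset al C0 m N N1 N2 N3 1 G. kcomp 2 r = a0}"
  define Ln where "Ln = N2 + N3"
  define L where "L = real Ln"
  have Ln1: "1 \<le> Ln" using N by (simp add: Ln_def)
  have L1: "1 \<le> L" using Ln1 by (simp add: L_def)
  have fin: "finite F" unfolding F_def using finite_Bset by simp
  have FM: "\<And>k k1 k2 k3. (k, k1, k2, k3) \<in> F \<Longrightarrow> k2 = a0 \<and> k = k1 - k2 + k3 \<and> k2 \<noteq> k1 \<and> k2 \<noteq> k3 \<and> \<bar>Phi al (k, k1, k2, k3) - m\<bar> \<le> C0 \<and>
    \<bar>k\<bar> \<le> int N \<and> \<bar>k1\<bar> \<le> int N1 \<and> \<bar>k2\<bar> \<le> int N2 \<and> \<bar>k3\<bar> \<le> int N3 \<and>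
    real_of_int \<bar>k1\<bar> \<le> G \<and> G < real_of_int \<bar>k\<bar>"
  proof -
    fix k k1 k2 k3 assume "(k, k1, k2, k3) \<in> F"
    from Rw_mem[OF this[unfolded F_def]] show "?thesis k k1 k2 k3" by (auto simp: kcomp_def)
  qed
  have cp: "0 \<le> Pb al C0" "Ks al C0 \<le> Kc al C0" "2 * (2 * C0 / dbig al + 1) + 1 \<le> Pb al C0"
    using consts_pos[of al C0] al C0 by auto
  have "real (card F) \<le> Kc al C0 * L"
  proof (cases "F = {}")
    case True then show ?thesis using cp consts_pos(1)[of al C0] al C0 L1 by (simp add: Kc_def)
  next
    case Fne: False
    then obtain r0 where "r0 \<in> F" by auto
    then have a0b: "\<bar>a0\<bar> \<le> int N2" using FM by (cases r0) force
    show ?thesis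
    proof (cases "G \<le> 3 * L")
      case small: True
      have "real (card F) \<le> Ks al C0 * real Ln"
        unfolding Ks_def
      proof (rule small_case[OF al _ fin Ln1, where g="kcomp 1" and h="kcomp 3" and c="\<lambda>y. y - a0"
            and K="\<lambda>y. ph al y - ph al a0" and s="\<lambda>y. 1" and yz=a0 and m=m and Y="{- 3 * int Ln..3 * int Ln}"])
        show "0 \<le> C0" using C0 by simp
        show "finite {- 3 * int Ln..3 * int Ln}" by simp
        show "real (card {- 3 * int Ln..3 * int Ln}) \<le> 7 * real Ln" using Ln1 by simp
        show "{- 3 * int Ln..3 * int Ln} \<subseteq> {a0 - int (4 * Ln)..a0 + int (4 * Ln)}" using a0b by (auto simp: Ln_def)
        show "kcomp 1 ` F \<subseteq> {- 3 * int Ln..3 * int Ln}"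
        proof
          fix y assume "y \<in> kcomp 1 ` F"
          then obtain r0 where rr: "r0 \<in> F" "y = kcomp 1 r0" by auto
          obtain k k1 k2 k3 where re: "r0 = (k, k1, k2, k3)" by (cases r0)
          have r: "(k, k1, k2, k3) \<in> F" "y = k1" using rr re by auto
          have "real_of_int \<bar>k1\<bar> \<le> 3 * real Ln" using FM[OF r(1)] small by (auto simp: L_def)
          then have "\<bar>k1\<bar> \<le> 3 * int Ln" by linarith
          then show "y \<in> {- 3 * int Ln..3 * int Ln}" using r(2) by (simp add: abs_le_iff)
        qed
        show "\<And>r. r \<in> F \<Longrightarrow> kcomp 1 r \<noteq> a0"
        proof -
          fix r assume rF: "r \<in> F"
          obtain k k1 k2 k3 where re: "r = (k, k1, k2, k3)" by (cases r)
          have "k2 = a0" "k2 \<noteq> k1" using FM rF re by auto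
          then show "kcomp 1 r \<noteq> a0" using re by auto
        qed
        show "\<And>y. inj_on (kcomp 3) {r \<in> F. kcomp 1 r = y}"
        proof (intro inj_onI)
          fix y r r' assume A: "r \<in> {r \<in> F. kcomp 1 r = y}" "r' \<in> {r \<in> F. kcomp 1 r = y}" "kcomp 3 r = kcomp 3 r'"
          obtain k k1 k2 k3 where re: "r = (k, k1, k2, k3)" by (cases r)
          obtain k' k1' k2' k3' where re': "r' = (k', k1', k2', k3')" by (cases r')
          have "k2 = a0" "k = k1 - k2 + k3" "k1 = y" using FM A re by auto
          moreover have "k2' = a0" "k' = k1' - k2' + k3'" "k1' = y" using FM A re' by auto
          moreover have "k3 = k3'" using A re re' by simp
          ultimately show "r = r'" using re re' by simp
        qed
        show "\<And>r. r \<in> F \<Longrightarrow> \<bar>kcomp 3 r\<bar> \<le> int (4 * Ln) \<and> \<bar>kcomp 3 r + (kcomp 1 r - a0)\<bar> \<le> int (4 * Ln)"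
        proof -
          fix r assume rF: "r \<in> F"
          obtain k k1 k2 k3 where re: "r = (k, k1, k2, k3)" by (cases r)
          have f: "k2 = a0" "k = k1 - k2 + k3" "\<bar>k2\<bar> \<le> int N2" "\<bar>k3\<bar> \<le> int N3" "real_of_int \<bar>k1\<bar> \<le> G"
            using FM rF re by auto
          have "real_of_int \<bar>k1\<bar> \<le> 3 * real Ln" using f small by (auto simp: L_def)
          then have "\<bar>k1\<bar> \<le> 3 * int Ln" by linarith
          then show "\<bar>kcomp 3 r\<bar> \<le> int (4 * Ln) \<and> \<bar>kcomp 3 r + (kcomp 1 r - a0)\<bar> \<le> int (4 * Ln)"
            using re f by (simp add: Ln_def abs_le_iff)
        qed
        show "\<And>y. \<bar>y - a0\<bar> = \<bar>y - a0\<bar>" by simp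
        show "\<And>r. r \<in> F \<Longrightarrow> Phi al r = ph al (kcomp 1 r) - ph al a0 + 1 * (ph al (kcomp 3 r) - ph al (kcomp 3 r + (kcomp 1 r - a0)))"
        proof -
          fix r assume rF: "r \<in> F"
          obtain k k1 k2 k3 where re: "r = (k, k1, k2, k3)" by (cases r)
          have "k2 = a0" "k = k1 - k2 + k3" using FM rF re by auto
          then have "k3 + (k1 - a0) = k" by simp
          then show "Phi al r = ph al (kcomp 1 r) - ph al a0 + 1 * (ph al (kcomp 3 r) - ph al (kcomp 3 r + (kcomp 1 r - a0)))"
            using re \<open>k2 = a0\<close> by (simp add: Phi_def)
        qed
        show "\<And>y. \<bar>1::real\<bar> = 1" by simp
        show "\<And>r. r \<in> F \<Longrightarrow> \<bar>Phi al r - m\<bar> \<le> C0"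
        proof -
          fix r assume rF: "r \<in> F"
          obtain k k1 k2 k3 where re: "r = (k, k1, k2, k3)" by (cases r)
          show "\<bar>Phi al r - m\<bar> \<le> C0" using FM rF re by auto
        qed
      qed
      also have "\<dots> \<le> Kc al C0 * L" using cp al C0 by (simp add: L_def mult_right_mono)
      finally show ?thesis .
    next
      case big: False
      define Y where "Y = {y::int. G < real_of_int \<bar>y\<bar> \<and> real_of_int \<bar>y\<bar> \<le> G + real Ln}"
      have "real (card F) \<le> 3 * L * Pb al C0"
      proof (rule big_case[where g=fst and Y=Y])
        show "finite Y" unfolding Y_def by (rule Yshell(1))
        show "real (card Y) \<le> 3 * L" using Yshell(2)[of G Ln] L1 unfolding Y_def L_def by linarith
        show "0 \<le> Pb al C0" by (rule cp(1))
        show "fst ` F \<subseteq> Y"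
        proof
          fix y assume "y \<in> fst ` F"
          then obtain k k1 k2 k3 where r: "(k, k1, k2, k3) \<in> F" "y = k" by force
          have f: "k = k1 - k2 + k3" "\<bar>k2\<bar> \<le> int N2" "\<bar>k3\<bar> \<le> int N3" "real_of_int \<bar>k1\<bar> \<le> G" "G < real_of_int \<bar>k\<bar>"
            using FM[OF r(1)] by auto
          have "\<bar>k\<bar> \<le> \<bar>k1\<bar> + int N2 + int N3" using f(1-3) by arith
          then have "real_of_int \<bar>k\<bar> \<le> real_of_int \<bar>k1\<bar> + real Ln" by (simp add: Ln_def)
          then show "y \<in> Y" using f r(2) unfolding Y_def by auto
        qed
        fix y assume "y \<in> Y"
        have "real (card {r \<in> F. fst r = y}) \<le> 2 * (2 * C0 / dbig al + 1) + 1"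
        proof (rule fiber_big_lip[OF al _ _ _ L1, where h="kcomp 1" and p="kcomp 3" and e="y + a0" and sc="-1"
              and K="- ph al a0 - ph al y" and sa=1 and sb=1 and m=m])
          show "0 \<le> C0" using C0 by simp
          show "finite {r \<in> F. fst r = y}" using fin by simp
          show "inj_on (kcomp 1) {r \<in> F. fst r = y}"
          proof (intro inj_onI)
            fix r r' assume A: "r \<in> {r \<in> F. fst r = y}" "r' \<in> {r \<in> F. fst r = y}" "kcomp 1 r = kcomp 1 r'"
            obtain k k1 k2 k3 where re: "r = (k, k1, k2, k3)" by (cases r)
            obtain k' k1' k2' k3' where re': "r' = (k', k1', k2', k3')" by (cases r')
            have "k2 = a0" "k = k1 - k2 + k3" "k = y" using FM A re by auto
            moreover have "k2' = a0" "k' = k1' - k2' + k3'" "k' = y" using FM A re' by auto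
            moreover have "k1 = k1'" using A re re' by simp
            ultimately show "r = r'" using re re' by simp
          qed
          show "\<And>r. r \<in> {r \<in> F. fst r = y} \<Longrightarrow> 2 * L \<le> real_of_int \<bar>kcomp 1 r\<bar> \<and> real_of_int \<bar>kcomp 3 r\<bar> \<le> L"
          proof -
            fix r assume rF: "r \<in> {r \<in> F. fst r = y}"
            obtain k k1 k2 k3 where re: "r = (k, k1, k2, k3)" by (cases r)
            have f: "k = k1 - k2 + k3" "\<bar>k2\<bar> \<le> int N2" "\<bar>k3\<bar> \<le> int N3" "G < real_of_int \<bar>k\<bar>"
              using FM rF re by auto
            have "\<bar>k\<bar> \<le> \<bar>k1\<bar> + int N2 + int N3" using f(1-3) by arith
            then have "real_of_int \<bar>k\<bar> \<le> real_of_int \<bar>k1\<bar> + L" by (simp add: Ln_def L_def)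
            moreover have "real_of_int \<bar>k3\<bar> \<le> L" using f N by (simp add: Ln_def L_def)
            ultimately show "2 * L \<le> real_of_int \<bar>kcomp 1 r\<bar> \<and> real_of_int \<bar>kcomp 3 r\<bar> \<le> L"
              using re f big by auto
          qed
          show "\<And>r. r \<in> {r \<in> F. fst r = y} \<Longrightarrow> kcomp 3 r = y + a0 + - 1 * kcomp 1 r"
          proof -
            fix r assume rF: "r \<in> {r \<in> F. fst r = y}"
            obtain k k1 k2 k3 where re: "r = (k, k1, k2, k3)" by (cases r)
            have "k2 = a0" "k = k1 - k2 + k3" "k = y" using FM rF re by auto
            then show "kcomp 3 r = y + a0 + - 1 * kcomp 1 r" using re by simp
          qed
          show "\<bar>- 1::int\<bar> = 1" by simp
          show "\<And>r. r \<in> {r \<in> F. fst r = y} \<Longrightarrow> Phi al r = - ph al a0 - ph al y + 1 * ph al (kcomp 1 r) + 1 * ph al (kcomp 3 r)"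
          proof -
            fix r assume rF: "r \<in> {r \<in> F. fst r = y}"
            obtain k k1 k2 k3 where re: "r = (k, k1, k2, k3)" by (cases r)
            have "k2 = a0" "k = y" using FM rF re by auto
            then show "Phi al r = - ph al a0 - ph al y + 1 * ph al (kcomp 1 r) + 1 * ph al (kcomp 3 r)"
              using re by (simp add: Phi_def)
          qed
          show "\<bar>1::real\<bar> = 1" "\<bar>1::real\<bar> = 1" by simp_all
          show "\<And>r. r \<in> {r \<in> F. fst r = y} \<Longrightarrow> \<bar>Phi al r - m\<bar> \<le> C0"
          proof -
            fix r assume rF: "r \<in> {r \<in> F. fst r = y}"
            obtain k k1 k2 k3 where re: "r = (k, k1, k2, k3)" by (cases r)
            show "\<bar>Phi al r - m\<bar> \<le> C0" using FM rF re by auto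
          qed
        qed
        then show "real (card {r \<in> F. fst r = y}) \<le> Pb al C0" using cp by linarith
      qed
      also have "\<dots> \<le> Kc al C0 * L"
        using cp consts_pos(1)[of al C0] al C0 L1 by (simp add: Kc_def algebra_simps)
      finally show ?thesis .
    qed
  qed
  then show ?thesis unfolding F_def L_def Ln_def .
qed

end

context
  fixes al C0 m G :: real and N N1 N2 N3 :: nat
  assumes al: "1 < al" "al < 2" and C0: "0 < C0"
    and N: "1 \<le> N2" "1 \<le> N3" "N2 \<le> N1" "N3 \<le> N1"
begin

lemma js1_row3:
  "real (card {r \<in> Bset al C0 m N N1 N2 N3 1 G. kcomp 3 r = a0}) \<le> Kc al C0 * real (N2 + N3)"
proof -
  define F where "F = {r \<in> Bset al C0 m N N1 N2 N3 1 G. kcomp 3 r = a0}"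
  define Ln where "Ln = N2 + N3"
  define L where "L = real Ln"
  have Ln1: "1 \<le> Ln" using N by (simp add: Ln_def)
  have L1: "1 \<le> L" using Ln1 by (simp add: L_def)
  have fin: "finite F" unfolding F_def using finite_Bset by simp
  have FM: "\<And>k k1 k2 k3. (k, k1, k2, k3) \<in> F \<Longrightarrow> k3 = a0 \<and> k = k1 - k2 + k3 \<and> k2 \<noteq> k1 \<and> k2 \<noteq> k3 \<and> \<bar>Phi al (k, k1, k2, k3) - m\<bar> \<le> C0 \<and>
    \<bar>k\<bar> \<le> int N \<and> \<bar>k1\<bar> \<le> int N1 \<and> \<bar>k2\<bar> \<le> int N2 \<and> \<bar>k3\<bar> \<le> int N3 \<and>
    real_of_int \<bar>k1\<bar> \<le> G \<and> G < real_of_int \<bar>k\<bar>"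
  proof -
    fix k k1 k2 k3 assume "(k, k1, k2, k3) \<in> F"
    from Rw_mem[OF this[unfolded F_def]] show "?thesis k k1 k2 k3" by (auto simp: kcomp_def)
  qed
  have cp: "0 \<le> Pb al C0" "Ks al C0 \<le> Kc al C0" "2 * (2 * C0 / dbig al + 1) + 1 \<le> Pb al C0"
    using consts_pos[of al C0] al C0 by auto
  have "real (card F) \<le> Kc al C0 * L"
  proof (cases "F = {}")
    case True then show ?thesis using cp consts_pos(1)[of al C0] al C0 L1 by (simp add: Kc_def)
  next
    case Fne: False
    then obtain r0 where "r0 \<in> F" by auto
    then have a0b: "\<bar>a0\<bar> \<le> int N3" using FM by (cases r0) force
    show ?thesis
    proof (cases "G \<le> 3 * L")
      case small: True
      have "real (card F) \<le> Ks al C0 * real Ln"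
        unfolding Ks_def
      proof (rule small_case[OF al _ fin Ln1, where g="kcomp 2" and h="kcomp 1" and c="\<lambda>y. a0 - y"
            and K="\<lambda>y. ph al a0 - ph al y" and s="\<lambda>y. 1" and yz=a0 and m=m and Y="{- int N2..int N2}"])
        show "0 \<le> C0" using C0 by simp
        show "finite {- int N2..int N2}" by simp
        show "real (card {- int N2..int N2}) \<le> 7 * real Ln" using Ln1 by (simp add: Ln_def)
        show "{- int N2..int N2} \<subseteq> {a0 - int (4 * Ln)..a0 + int (4 * Ln)}" using a0b by (auto simp: Ln_def)
        show "kcomp 2 ` F \<subseteq> {- int N2..int N2}"
        proof
          fix y assume "y \<in> kcomp 2 ` F"
          then obtain r0 where rr: "r0 \<in> F" "y = kcomp 2 r0" by auto
          obtain k k1 k2 k3 where re: "r0 = (k, k1, k2, k3)" by (cases r0)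
          have r: "(k, k1, k2, k3) \<in> F" "y = k2" using rr re by auto
          have "\<bar>k2\<bar> \<le> int N2" using FM[OF r(1)] by auto
          then show "y \<in> {- int N2..int N2}" using r(2) by (simp add: abs_le_iff)
        qed
        show "\<And>r. r \<in> F \<Longrightarrow> kcomp 2 r \<noteq> a0"
        proof -
          fix r assume rF: "r \<in> F"
          obtain k k1 k2 k3 where re: "r = (k, k1, k2, k3)" by (cases r)
          have "k3 = a0" "k2 \<noteq> k3" using FM rF re by auto
          then show "kcomp 2 r \<noteq> a0" using re by auto
        qed
        show "\<And>y. inj_on (kcomp 1) {r \<in> F. kcomp 2 r = y}"
        proof (intro inj_onI)
          fix y r r' assume A: "r \<in> {r \<in> F. kcomp 2 r = y}" "r' \<in> {r \<in> F. kcomp 2 r = y}" "kcomp 1 r = kcomp 1 r'"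
          obtain k k1 k2 k3 where re: "r = (k, k1, k2, k3)" by (cases r)
          obtain k' k1' k2' k3' where re': "r' = (k', k1', k2', k3')" by (cases r')
          have "k3 = a0" "k = k1 - k2 + k3" "k2 = y" using FM A re by auto
          moreover have "k3' = a0" "k' = k1' - k2' + k3'" "k2' = y" using FM A re' by auto
          moreover have "k1 = k1'" using A re re' by simp
          ultimately show "r = r'" using re re' by simp
        qed
        show "\<And>r. r \<in> F \<Longrightarrow> \<bar>kcomp 1 r\<bar> \<le> int (4 * Ln) \<and> \<bar>kcomp 1 r + (a0 - kcomp 2 r)\<bar> \<le> int (4 * Ln)"
        proof -
          fix r assume rF: "r \<in> F"
          obtain k k1 k2 k3 where re: "r = (k, k1, k2, k3)" by (cases r)
          have f: "k3 = a0" "k = k1 - k2 + k3" "\<bar>k2\<bar> \<le> int N2" "\<bar>k3\<bar> \<le> int N3" "real_of_int \<bar>k1\<bar> \<le> G"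
            using FM rF re by auto
          have "real_of_int \<bar>k1\<bar> \<le> 3 * real Ln" using f small by (auto simp: L_def)
          then have "\<bar>k1\<bar> \<le> 3 * int Ln" by linarith
          then show "\<bar>kcomp 1 r\<bar> \<le> int (4 * Ln) \<and> \<bar>kcomp 1 r + (a0 - kcomp 2 r)\<bar> \<le> int (4 * Ln)"
            using re f by (simp add: Ln_def abs_le_iff)
        qed
        show "\<And>y. \<bar>a0 - y\<bar> = \<bar>y - a0\<bar>" by simp
        show "\<And>r. r \<in> F \<Longrightarrow> Phi al r = ph al a0 - ph al (kcomp 2 r) + 1 * (ph al (kcomp 1 r) - ph al (kcomp 1 r + (a0 - kcomp 2 r)))"
        proof -
          fix r assume rF: "r \<in> F"
          obtain k k1 k2 k3 where re: "r = (k, k1, k2, k3)" by (cases r)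
          have "k3 = a0" "k = k1 - k2 + k3" using FM rF re by auto
          then have "k1 + (a0 - k2) = k" by simp
          then show "Phi al r = ph al a0 - ph al (kcomp 2 r) + 1 * (ph al (kcomp 1 r) - ph al (kcomp 1 r + (a0 - kcomp 2 r)))"
            using re \<open>k3 = a0\<close> by (simp add: Phi_def)
        qed
        show "\<And>y. \<bar>1::real\<bar> = 1" by simp
        show "\<And>r. r \<in> F \<Longrightarrow> \<bar>Phi al r - m\<bar> \<le> C0"
        proof -
          fix r assume rF: "r \<in> F"
          obtain k k1 k2 k3 where re: "r = (k, k1, k2, k3)" by (cases r)
          show "\<bar>Phi al r - m\<bar> \<le> C0" using FM rF re by auto
        qed
      qed
      also have "\<dots> \<le> Kc al C0 * L" using cp al C0 by (simp add: L_def mult_right_mono)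
      finally show ?thesis .
    next
      case big: False
      define Y where "Y = {y::int. G < real_of_int \<bar>y\<bar> \<and> real_of_int \<bar>y\<bar> \<le> G + real Ln}"
      have "real (card F) \<le> 3 * L * Pb al C0"
      proof (rule big_case[where g=fst and Y=Y])
        show "finite Y" unfolding Y_def by (rule Yshell(1))
        show "real (card Y) \<le> 3 * L" using Yshell(2)[of G Ln] L1 unfolding Y_def L_def by linarith
        show "0 \<le> Pb al C0" by (rule cp(1))
        show "fst ` F \<subseteq> Y"
        proof
          fix y assume "y \<in> fst ` F"
          then obtain k k1 k2 k3 where r: "(k, k1, k2, k3) \<in> F" "y = k" by force
          have f: "k = k1 - k2 + k3" "\<bar>k2\<bar> \<le> int N2" "\<bar>k3\<bar> \<le> int N3" "real_of_int \<bar>k1\<bar> \<le> G" "G < real_of_int \<bar>k\<bar>"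
            using FM[OF r(1)] by auto
          have "\<bar>k\<bar> \<le> \<bar>k1\<bar> + int N2 + int N3" using f(1-3) by arith
          then have "real_of_int \<bar>k\<bar> \<le> real_of_int \<bar>k1\<bar> + real Ln" by (simp add: Ln_def)
          then show "y \<in> Y" using f r(2) unfolding Y_def by auto
        qed
        fix y assume "y \<in> Y"
        have "real (card {r \<in> F. fst r = y}) \<le> 2 * (2 * C0 / dbig al + 1) + 1"
        proof (rule fiber_big_lip[OF al _ _ _ L1, where h="kcomp 1" and p="kcomp 2" and e="a0 - y" and sc="1"
              and K="ph al a0 - ph al y" and sa=1 and sb="-1" and m=m])
          show "0 \<le> C0" using C0 by simp
          show "finite {r \<in> F. fst r = y}" using fin by simp
          show "inj_on (kcomp 1) {r \<in> F. fst r = y}"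
          proof (intro inj_onI)
            fix r r' assume A: "r \<in> {r \<in> F. fst r = y}" "r' \<in> {r \<in> F. fst r = y}" "kcomp 1 r = kcomp 1 r'"
            obtain k k1 k2 k3 where re: "r = (k, k1, k2, k3)" by (cases r)
            obtain k' k1' k2' k3' where re': "r' = (k', k1', k2', k3')" by (cases r')
            have "k3 = a0" "k = k1 - k2 + k3" "k = y" using FM A re by auto
            moreover have "k3' = a0" "k' = k1' - k2' + k3'" "k' = y" using FM A re' by auto
            moreover have "k1 = k1'" using A re re' by simp
            ultimately show "r = r'" using re re' by simp
          qed
          show "\<And>r. r \<in> {r \<in> F. fst r = y} \<Longrightarrow> 2 * L \<le> real_of_int \<bar>kcomp 1 r\<bar> \<and> real_of_int \<bar>kcomp 2 r\<bar> \<le> L"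
          proof -
            fix r assume rF: "r \<in> {r \<in> F. fst r = y}"
            obtain k k1 k2 k3 where re: "r = (k, k1, k2, k3)" by (cases r)
            have f: "k = k1 - k2 + k3" "\<bar>k2\<bar> \<le> int N2" "\<bar>k3\<bar> \<le> int N3" "G < real_of_int \<bar>k\<bar>"
              using FM rF re by auto
            have "\<bar>k\<bar> \<le> \<bar>k1\<bar> + int N2 + int N3" using f(1-3) by arith
            then have "real_of_int \<bar>k\<bar> \<le> real_of_int \<bar>k1\<bar> + L" by (simp add: Ln_def L_def)
            moreover have "real_of_int \<bar>k2\<bar> \<le> L" using f N by (simp add: Ln_def L_def)
            ultimately show "2 * L \<le> real_of_int \<bar>kcomp 1 r\<bar> \<and> real_of_int \<bar>kcomp 2 r\<bar> \<le> L"
              using re f big by auto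
          qed
          show "\<And>r. r \<in> {r \<in> F. fst r = y} \<Longrightarrow> kcomp 2 r = a0 - y + 1 * kcomp 1 r"
          proof -
            fix r assume rF: "r \<in> {r \<in> F. fst r = y}"
            obtain k k1 k2 k3 where re: "r = (k, k1, k2, k3)" by (cases r)
            have "k3 = a0" "k = k1 - k2 + k3" "k = y" using FM rF re by auto
            then show "kcomp 2 r = a0 - y + 1 * kcomp 1 r" using re by simp
          qed
          show "\<bar>1::int\<bar> = 1" by simp
          show "\<And>r. r \<in> {r \<in> F. fst r = y} \<Longrightarrow> Phi al r = ph al a0 - ph al y + 1 * ph al (kcomp 1 r) + - 1 * ph al (kcomp 2 r)"
          proof -
            fix r assume rF: "r \<in> {r \<in> F. fst r = y}"
            obtain k k1 k2 k3 where re: "r = (k, k1, k2, k3)" by (cases r)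
            have "k3 = a0" "k = y" using FM rF re by auto
            then show "Phi al r = ph al a0 - ph al y + 1 * ph al (kcomp 1 r) + - 1 * ph al (kcomp 2 r)"
              using re by (simp add: Phi_def)
          qed
          show "\<bar>1::real\<bar> = 1" "\<bar>- 1::real\<bar> = 1" by simp_all
          show "\<And>r. r \<in> {r \<in> F. fst r = y} \<Longrightarrow> \<bar>Phi al r - m\<bar> \<le> C0"
          proof -
            fix r assume rF: "r \<in> {r \<in> F. fst r = y}"
            obtain k k1 k2 k3 where re: "r = (k, k1, k2, k3)" by (cases r)
            show "\<bar>Phi al r - m\<bar> \<le> C0" using FM rF re by auto
          qed
        qed
        then show "real (card {r \<in> F. fst r = y}) \<le> Pb al C0" using cp by linarith
      qed
      also have "\<dots> \<le> Kc al C0 * L"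
        using cp consts_pos(1)[of al C0] al C0 L1 by (simp add: Kc_def algebra_simps)
      finally show ?thesis .
    qed
  qed
  then show ?thesis unfolding F_def L_def Ln_def .
qed

end

context
  fixes al C0 m G :: real and N N1 N2 N3 :: nat
  assumes al: "1 < al" "al < 2" and C0: "0 < C0"
    and N: "1 \<le> N1" "1 \<le> N3" "N1 \<le> N2" "N3 \<le> N2"
begin

lemma js2_row2:
  "real (card {r \<in> Bset al C0 m N N1 N2 N3 2 G. kcomp 2 r = a0}) \<le> Kc al C0 * real (N1 + N3)"
proof -
  define F where "F = {r \<in> Bset al C0 m N N1 N2 N3 2 G. kcomp 2 r = a0}"
  define Ln where "Ln = N1 + N3"
  define L where "L = real Ln"
  have Ln1: "1 \<le> Ln" using N by (simp add: Ln_def)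
  have L1: "1 \<le> L" using Ln1 by (simp add: L_def)
  have fin: "finite F" unfolding F_def using finite_Bset by simp
  have FM: "\<And>k k1 k2 k3. (k, k1, k2, k3) \<in> F \<Longrightarrow> k2 = a0 \<and> k = k1 - k2 + k3 \<and> k2 \<noteq> k1 \<and> k2 \<noteq> k3 \<and> \<bar>Phi al (k, k1, k2, k3) - m\<bar> \<le> C0 \<and>
    \<bar>k\<bar> \<le> int N \<and> \<bar>k1\<bar> \<le> int N1 \<and> \<bar>k2\<bar> \<le> int N2 \<and> \<bar>k3\<bar> \<le> int N3 \<and>
    real_of_int \<bar>k2\<bar> \<le> G \<and> G < real_of_int \<bar>k\<bar>"
  proof -
    fix k k1 k2 k3 assume "(k, k1, k2, k3) \<in> F"
    from Rw_mem[OF this[unfolded F_def]] show "?thesis k k1 k2 k3" by (auto simp: kcomp_def)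
  qed
  have cp: "0 \<le> Pb al C0" "Ks al C0 \<le> Kc al C0" "2 * (2 * C0 / dbig al + 1) + 1 \<le> Pb al C0"
    using consts_pos[of al C0] al C0 by auto
  have "real (card F) \<le> Kc al C0 * L"
  proof (cases "F = {}")
    case True then show ?thesis using cp consts_pos(1)[of al C0] al C0 L1 by (simp add: Kc_def)
  next
    case Fne: False
    then obtain r0 where "r0 \<in> F" by auto
    then have a0b: "real_of_int \<bar>a0\<bar> \<le> G" using FM by (cases r0) force
    show ?thesis
    proof (cases "G \<le> 3 * L")
      case small: True
      have a0s: "\<bar>a0\<bar> \<le> 3 * int Ln"
      proof -
        have "real_of_int \<bar>a0\<bar> \<le> 3 * real Ln" using a0b small by (simp add: L_def)
        then show ?thesis by linarith
      qed
      have "real (card F) \<le> Ks al C0 * real Ln"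
        unfolding Ks_def
      proof (rule small_case[OF al _ fin Ln1, where g="kcomp 1" and h="kcomp 3" and c="\<lambda>y. y - a0"
            and K="\<lambda>y. ph al y - ph al a0" and s="\<lambda>y. 1" and yz=a0 and m=m and Y="{- int N1..int N1}"])
        show "0 \<le> C0" using C0 by simp
        show "finite {- int N1..int N1}" by simp
        show "real (card {- int N1..int N1}) \<le> 7 * real Ln" using Ln1 by (simp add: Ln_def)
        show "{- int N1..int N1} \<subseteq> {a0 - int (4 * Ln)..a0 + int (4 * Ln)}" using a0s by (auto simp: Ln_def)
        show "kcomp 1 ` F \<subseteq> {- int N1..int N1}"
        proof
          fix y assume "y \<in> kcomp 1 ` F"
          then obtain r0 where rr: "r0 \<in> F" "y = kcomp 1 r0" by auto
          obtain k k1 k2 k3 where re: "r0 = (k, k1, k2, k3)" by (cases r0)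
          have r: "(k, k1, k2, k3) \<in> F" "y = k1" using rr re by auto
          have "\<bar>k1\<bar> \<le> int N1" using FM[OF r(1)] by auto
          then show "y \<in> {- int N1..int N1}" using r(2) by (simp add: abs_le_iff)
        qed
        show "\<And>r. r \<in> F \<Longrightarrow> kcomp 1 r \<noteq> a0"
        proof -
          fix r assume rF: "r \<in> F"
          obtain k k1 k2 k3 where re: "r = (k, k1, k2, k3)" by (cases r)
          have "k2 = a0" "k2 \<noteq> k1" using FM rF re by auto
          then show "kcomp 1 r \<noteq> a0" using re by auto
        qed
        show "\<And>y. inj_on (kcomp 3) {r \<in> F. kcomp 1 r = y}"
        proof (intro inj_onI)
          fix y r r' assume A: "r \<in> {r \<in> F. kcomp 1 r = y}" "r' \<in> {r \<in> F. kcomp 1 r = y}" "kcomp 3 r = kcomp 3 r'"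
          obtain k k1 k2 k3 where re: "r = (k, k1, k2, k3)" by (cases r)
          obtain k' k1' k2' k3' where re': "r' = (k', k1', k2', k3')" by (cases r')
          have "k2 = a0" "k = k1 - k2 + k3" "k1 = y" using FM A re by auto
          moreover have "k2' = a0" "k' = k1' - k2' + k3'" "k1' = y" using FM A re' by auto
          moreover have "k3 = k3'" using A re re' by simp
          ultimately show "r = r'" using re re' by simp
        qed
        show "\<And>r. r \<in> F \<Longrightarrow> \<bar>kcomp 3 r\<bar> \<le> int (4 * Ln) \<and> \<bar>kcomp 3 r + (kcomp 1 r - a0)\<bar> \<le> int (4 * Ln)"
        proof -
          fix r assume rF: "r \<in> F"
          obtain k k1 k2 k3 where re: "r = (k, k1, k2, k3)" by (cases r)
          have f: "k2 = a0" "k = k1 - k2 + k3" "\<bar>k1\<bar> \<le> int N1" "\<bar>k3\<bar> \<le> int N3"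
            using FM rF re by auto
          then show "\<bar>kcomp 3 r\<bar> \<le> int (4 * Ln) \<and> \<bar>kcomp 3 r + (kcomp 1 r - a0)\<bar> \<le> int (4 * Ln)"
            using re a0s by (simp add: Ln_def abs_le_iff)
        qed
        show "\<And>y. \<bar>y - a0\<bar> = \<bar>y - a0\<bar>" by simp
        show "\<And>r. r \<in> F \<Longrightarrow> Phi al r = ph al (kcomp 1 r) - ph al a0 + 1 * (ph al (kcomp 3 r) - ph al (kcomp 3 r + (kcomp 1 r - a0)))"
        proof -
          fix r assume rF: "r \<in> F"
          obtain k k1 k2 k3 where re: "r = (k, k1, k2, k3)" by (cases r)
          have "k2 = a0" "k = k1 - k2 + k3" using FM rF re by auto
          then have "k3 + (k1 - a0) = k" by simp
          then show "Phi al r = ph al (kcomp 1 r) - ph al a0 + 1 * (ph al (kcomp 3 r) - ph al (kcomp 3 r + (kcomp 1 r - a0)))"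
            using re \<open>k2 = a0\<close> by (simp add: Phi_def)
        qed
        show "\<And>y. \<bar>1::real\<bar> = 1" by simp
        show "\<And>r. r \<in> F \<Longrightarrow> \<bar>Phi al r - m\<bar> \<le> C0"
        proof -
          fix r assume rF: "r \<in> F"
          obtain k k1 k2 k3 where re: "r = (k, k1, k2, k3)" by (cases r)
          show "\<bar>Phi al r - m\<bar> \<le> C0" using FM rF re by auto
        qed
      qed
      also have "\<dots> \<le> Kc al C0 * L" using cp al C0 by (simp add: L_def mult_right_mono)
      finally show ?thesis .
    next
      case big: False
      define Y where "Y = {- int N1..int N1}"
      have "real (card F) \<le> 3 * L * Pb al C0"
      proof (rule big_case[where g="kcomp 1" and Y=Y])
        show "finite Y" unfolding Y_def by simp
        show "real (card Y) \<le> 3 * L" using L1 unfolding Y_def L_def Ln_def by simp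
        show "0 \<le> Pb al C0" by (rule cp(1))
        show "kcomp 1 ` F \<subseteq> Y"
        proof
          fix y assume "y \<in> kcomp 1 ` F"
          then obtain r0 where rr: "r0 \<in> F" "y = kcomp 1 r0" by auto
          obtain k k1 k2 k3 where re: "r0 = (k, k1, k2, k3)" by (cases r0)
          have r: "(k, k1, k2, k3) \<in> F" "y = k1" using rr re by auto
          have "\<bar>k1\<bar> \<le> int N1" using FM[OF r(1)] by auto
          then show "y \<in> Y" using r(2) unfolding Y_def by (simp add: abs_le_iff)
        qed
        fix y assume "y \<in> Y"
        have "real (card {r \<in> F. kcomp 1 r = y}) \<le> 2 * (2 * C0 / dbig al + 1) + 1"
        proof (rule fiber_big_lip[OF al _ _ _ L1, where h="fst" and p="kcomp 3" and e="a0 - y" and sc="1"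
              and K="ph al y - ph al a0" and sa="-1" and sb=1 and m=m])
          show "0 \<le> C0" using C0 by simp
          show "finite {r \<in> F. kcomp 1 r = y}" using fin by simp
          show "inj_on fst {r \<in> F. kcomp 1 r = y}"
          proof (intro inj_onI)
            fix r r' assume A: "r \<in> {r \<in> F. kcomp 1 r = y}" "r' \<in> {r \<in> F. kcomp 1 r = y}" "fst r = fst r'"
            obtain k k1 k2 k3 where re: "r = (k, k1, k2, k3)" by (cases r)
            obtain k' k1' k2' k3' where re': "r' = (k', k1', k2', k3')" by (cases r')
            have "k2 = a0" "k = k1 - k2 + k3" "k1 = y" using FM A re by auto
            moreover have "k2' = a0" "k' = k1' - k2' + k3'" "k1' = y" using FM A re' by auto
            moreover have "k = k'" using A re re' by simp
            ultimately show "r = r'" using re re' by simp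
          qed
          show "\<And>r. r \<in> {r \<in> F. kcomp 1 r = y} \<Longrightarrow> 2 * L \<le> real_of_int \<bar>fst r\<bar> \<and> real_of_int \<bar>kcomp 3 r\<bar> \<le> L"
          proof -
            fix r assume rF: "r \<in> {r \<in> F. kcomp 1 r = y}"
            obtain k k1 k2 k3 where re: "r = (k, k1, k2, k3)" by (cases r)
            have f: "\<bar>k3\<bar> \<le> int N3" "G < real_of_int \<bar>k\<bar>"
              using FM rF re by auto
            have "real_of_int \<bar>k3\<bar> \<le> L" using f N by (simp add: Ln_def L_def)
            then show "2 * L \<le> real_of_int \<bar>fst r\<bar> \<and> real_of_int \<bar>kcomp 3 r\<bar> \<le> L"
              using re f big L1 by auto
          qed
          show "\<And>r. r \<in> {r \<in> F. kcomp 1 r = y} \<Longrightarrow> kcomp 3 r = a0 - y + 1 * fst r"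
          proof -
            fix r assume rF: "r \<in> {r \<in> F. kcomp 1 r = y}"
            obtain k k1 k2 k3 where re: "r = (k, k1, k2, k3)" by (cases r)
            have "k2 = a0" "k = k1 - k2 + k3" "k1 = y" using FM rF re by auto
            then show "kcomp 3 r = a0 - y + 1 * fst r" using re by simp
          qed
          show "\<bar>1::int\<bar> = 1" by simp
          show "\<And>r. r \<in> {r \<in> F. kcomp 1 r = y} \<Longrightarrow> Phi al r = ph al y - ph al a0 + - 1 * ph al (fst r) + 1 * ph al (kcomp 3 r)"
          proof -
            fix r assume rF: "r \<in> {r \<in> F. kcomp 1 r = y}"
            obtain k k1 k2 k3 where re: "r = (k, k1, k2, k3)" by (cases r)
            have "k2 = a0" "k1 = y" using FM rF re by auto
            then show "Phi al r = ph al y - ph al a0 + - 1 * ph al (fst r) + 1 * ph al (kcomp 3 r)"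
              using re by (simp add: Phi_def)
          qed
          show "\<bar>- 1::real\<bar> = 1" "\<bar>1::real\<bar> = 1" by simp_all
          show "\<And>r. r \<in> {r \<in> F. kcomp 1 r = y} \<Longrightarrow> \<bar>Phi al r - m\<bar> \<le> C0"
          proof -
            fix r assume rF: "r \<in> {r \<in> F. kcomp 1 r = y}"
            obtain k k1 k2 k3 where re: "r = (k, k1, k2, k3)" by (cases r)
            show "\<bar>Phi al r - m\<bar> \<le> C0" using FM rF re by auto
          qed
        qed
        then show "real (card {r \<in> F. kcomp 1 r = y}) \<le> Pb al C0" using cp by linarith
      qed
      also have "\<dots> \<le> Kc al C0 * L"
        using cp consts_pos(1)[of al C0] al C0 L1 by (simp add: Kc_def algebra_simps)
      finally show ?thesis .
    qed
  qed
  then show ?thesis unfolding F_def L_def Ln_def .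
qed

end

context
  fixes al C0 m G :: real and N N1 N2 N3 :: nat
  assumes al: "1 < al" "al < 2" and C0: "0 < C0"
    and N: "1 \<le> N1" "1 \<le> N3" "N1 \<le> N2" "N3 \<le> N2"
begin

lemma js2_row1:
  "real (card {r \<in> Bset al C0 m N N1 N2 N3 2 G. kcomp 1 r = a0}) \<le> Kc al C0 * real (N1 + N3)"
proof -
  define F where "F = {r \<in> Bset al C0 m N N1 N2 N3 2 G. kcomp 1 r = a0}"
  define Ln where "Ln = N1 + N3"
  define L where "L = real Ln"
  have Ln1: "1 \<le> Ln" using N by (simp add: Ln_def)
  have L1: "1 \<le> L" using Ln1 by (simp add: L_def)
  have fin: "finite F" unfolding F_def using finite_Bset by simp
  have FM: "\<And>k k1 k2 k3. (k, k1, k2, k3) \<in> F \<Longrightarrow> k1 = a0 \<and> k = k1 - k2 + k3 \<and> k2 \<noteq> k1 \<and> k2 \<noteq> k3 \<and> \<bar>Phi al (k, k1, k2, k3) - m\<bar> \<le> C0 \<and>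
    \<bar>k\<bar> \<le> int N \<and> \<bar>k1\<bar> \<le> int N1 \<and> \<bar>k2\<bar> \<le> int N2 \<and> \<bar>k3\<bar> \<le> int N3 \<and>
    real_of_int \<bar>k2\<bar> \<le> G \<and> G < real_of_int \<bar>k\<bar>"
  proof -
    fix k k1 k2 k3 assume "(k, k1, k2, k3) \<in> F"
    from Rw_mem[OF this[unfolded F_def]] show "?thesis k k1 k2 k3" by (auto simp: kcomp_def)
  qed
  have cp: "0 \<le> Pb al C0" "Ks al C0 \<le> Kc al C0" "2 * (2 * C0 / al + 1) + 1 \<le> Pb al C0"
    using consts_pos[of al C0] al C0 by auto
  have "real (card F) \<le> Kc al C0 * L"
  proof (cases "F = {}")
    case True then show ?thesis using cp consts_pos(1)[of al C0] al C0 L1 by (simp add: Kc_def)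
  next
    case Fne: False
    then obtain r0 where "r0 \<in> F" by auto
    then have a0b: "\<bar>a0\<bar> \<le> int N1" using FM by (cases r0) force
    show ?thesis
    proof (cases "G \<le> 3 * L")
      case small: True
      have "real (card F) \<le> Ks al C0 * real Ln"
        unfolding Ks_def
      proof (rule small_case[OF al _ fin Ln1, where g="kcomp 2" and h="kcomp 3" and c="\<lambda>y. a0 - y"
            and K="\<lambda>y. ph al a0 - ph al y" and s="\<lambda>y. 1" and yz=a0 and m=m and Y="{- 3 * int Ln..3 * int Ln}"])
        show "0 \<le> C0" using C0 by simp
        show "finite {- 3 * int Ln..3 * int Ln}" by simp
        show "real (card {- 3 * int Ln..3 * int Ln}) \<le> 7 * real Ln" using Ln1 by simp
        show "{- 3 * int Ln..3 * int Ln} \<subseteq> {a0 - int (4 * Ln)..a0 + int (4 * Ln)}" using a0b by (auto simp: Ln_def)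
        show "kcomp 2 ` F \<subseteq> {- 3 * int Ln..3 * int Ln}"
        proof
          fix y assume "y \<in> kcomp 2 ` F"
          then obtain r0 where rr: "r0 \<in> F" "y = kcomp 2 r0" by auto
          obtain k k1 k2 k3 where re: "r0 = (k, k1, k2, k3)" by (cases r0)
          have r: "(k, k1, k2, k3) \<in> F" "y = k2" using rr re by auto
          have "real_of_int \<bar>k2\<bar> \<le> 3 * real Ln" using FM[OF r(1)] small by (auto simp: L_def)
          then have "\<bar>k2\<bar> \<le> 3 * int Ln" by linarith
          then show "y \<in> {- 3 * int Ln..3 * int Ln}" using r(2) by (simp add: abs_le_iff)
        qed
        show "\<And>r. r \<in> F \<Longrightarrow> kcomp 2 r \<noteq> a0"
        proof -
          fix r assume rF: "r \<in> F"
          obtain k k1 k2 k3 where re: "r = (k, k1, k2, k3)" by (cases r)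
          have "k1 = a0" "k2 \<noteq> k1" using FM rF re by auto
          then show "kcomp 2 r \<noteq> a0" using re by auto
        qed
        show "\<And>y. inj_on (kcomp 3) {r \<in> F. kcomp 2 r = y}"
        proof (intro inj_onI)
          fix y r r' assume A: "r \<in> {r \<in> F. kcomp 2 r = y}" "r' \<in> {r \<in> F. kcomp 2 r = y}" "kcomp 3 r = kcomp 3 r'"
          obtain k k1 k2 k3 where re: "r = (k, k1, k2, k3)" by (cases r)
          obtain k' k1' k2' k3' where re': "r' = (k', k1', k2', k3')" by (cases r')
          have "k1 = a0" "k = k1 - k2 + k3" "k2 = y" using FM A re by auto
          moreover have "k1' = a0" "k' = k1' - k2' + k3'" "k2' = y" using FM A re' by auto
          moreover have "k3 = k3'" using A re re' by simp
          ultimately show "r = r'" using re re' by simp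
        qed
        show "\<And>r. r \<in> F \<Longrightarrow> \<bar>kcomp 3 r\<bar> \<le> int (4 * Ln) \<and> \<bar>kcomp 3 r + (a0 - kcomp 2 r)\<bar> \<le> int (4 * Ln)"
        proof -
          fix r assume rF: "r \<in> F"
          obtain k k1 k2 k3 where re: "r = (k, k1, k2, k3)" by (cases r)
          have f: "k1 = a0" "k = k1 - k2 + k3" "\<bar>k1\<bar> \<le> int N1" "\<bar>k3\<bar> \<le> int N3" "real_of_int \<bar>k2\<bar> \<le> G"
            using FM rF re by auto
          have "real_of_int \<bar>k2\<bar> \<le> 3 * real Ln" using f small by (auto simp: L_def)
          then have "\<bar>k2\<bar> \<le> 3 * int Ln" by linarith
          then show "\<bar>kcomp 3 r\<bar> \<le> int (4 * Ln) \<and> \<bar>kcomp 3 r + (a0 - kcomp 2 r)\<bar> \<le> int (4 * Ln)"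
            using re f by (simp add: Ln_def abs_le_iff)
        qed
        show "\<And>y. \<bar>a0 - y\<bar> = \<bar>y - a0\<bar>" by simp
        show "\<And>r. r \<in> F \<Longrightarrow> Phi al r = ph al a0 - ph al (kcomp 2 r) + 1 * (ph al (kcomp 3 r) - ph al (kcomp 3 r + (a0 - kcomp 2 r)))"
        proof -
          fix r assume rF: "r \<in> F"
          obtain k k1 k2 k3 where re: "r = (k, k1, k2, k3)" by (cases r)
          have "k1 = a0" "k = k1 - k2 + k3" using FM rF re by auto
          then have "k3 + (a0 - k2) = k" by simp
          then show "Phi al r = ph al a0 - ph al (kcomp 2 r) + 1 * (ph al (kcomp 3 r) - ph al (kcomp 3 r + (a0 - kcomp 2 r)))"
            using re \<open>k1 = a0\<close> by (simp add: Phi_def)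
        qed
        show "\<And>y. \<bar>1::real\<bar> = 1" by simp
        show "\<And>r. r \<in> F \<Longrightarrow> \<bar>Phi al r - m\<bar> \<le> C0"
        proof -
          fix r assume rF: "r \<in> F"
          obtain k k1 k2 k3 where re: "r = (k, k1, k2, k3)" by (cases r)
          show "\<bar>Phi al r - m\<bar> \<le> C0" using FM rF re by auto
        qed
      qed
      also have "\<dots> \<le> Kc al C0 * L" using cp al C0 by (simp add: L_def mult_right_mono)
      finally show ?thesis .
    next
      case big: False
      define Y where "Y = {- int N3..int N3}"
      have "real (card F) \<le> 3 * L * Pb al C0"
      proof (rule big_case[where g="kcomp 3" and Y=Y])
        show "finite Y" unfolding Y_def by simp
        show "real (card Y) \<le> 3 * L" using L1 unfolding Y_def L_def Ln_def by simp
        show "0 \<le> Pb al C0" by (rule cp(1))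
        show "kcomp 3 ` F \<subseteq> Y"
        proof
          fix y assume "y \<in> kcomp 3 ` F"
          then obtain r0 where rr: "r0 \<in> F" "y = kcomp 3 r0" by auto
          obtain k k1 k2 k3 where re: "r0 = (k, k1, k2, k3)" by (cases r0)
          have r: "(k, k1, k2, k3) \<in> F" "y = k3" using rr re by auto
          have "\<bar>k3\<bar> \<le> int N3" using FM[OF r(1)] by auto
          then show "y \<in> Y" using r(2) unfolding Y_def by (simp add: abs_le_iff)
        qed
        fix y assume "y \<in> Y"
        have "real (card {r \<in> F. kcomp 3 r = y}) \<le> 2 * (2 * C0 / al + 1) + 1"
        proof (rule fiber_big_sum[OF al(1) _ _ _, where h="kcomp 2" and e="a0 + y" and K="ph al a0 + ph al y" and m=m])
          show "0 \<le> C0" using C0 by simp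
          show "finite {r \<in> F. kcomp 3 r = y}" using fin by simp
          show "inj_on (kcomp 2) {r \<in> F. kcomp 3 r = y}"
          proof (intro inj_onI)
            fix r r' assume A: "r \<in> {r \<in> F. kcomp 3 r = y}" "r' \<in> {r \<in> F. kcomp 3 r = y}" "kcomp 2 r = kcomp 2 r'"
            obtain k k1 k2 k3 where re: "r = (k, k1, k2, k3)" by (cases r)
            obtain k' k1' k2' k3' where re': "r' = (k', k1', k2', k3')" by (cases r')
            have "k1 = a0" "k = k1 - k2 + k3" "k3 = y" using FM A re by auto
            moreover have "k1' = a0" "k' = k1' - k2' + k3'" "k3' = y" using FM A re' by auto
            moreover have "k2 = k2'" using A re re' by simp
            ultimately show "r = r'" using re re' by simp
          qed
          show "\<And>r. r \<in> {r \<in> F. kcomp 3 r = y} \<Longrightarrow> 1 \<le> \<bar>kcomp 2 r\<bar> \<and> kcomp 2 r * (a0 + y - kcomp 2 r) < 0"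
          proof -
            fix r assume rF: "r \<in> {r \<in> F. kcomp 3 r = y}"
            obtain k k1 k2 k3 where re: "r = (k, k1, k2, k3)" by (cases r)
            have f: "k1 = a0" "k = k1 - k2 + k3" "k3 = y" "\<bar>k1\<bar> \<le> int N1" "\<bar>k3\<bar> \<le> int N3" "G < real_of_int \<bar>k\<bar>"
              using FM rF re by auto
            have ek: "a0 + y - k2 = k" using f by simp
            have neg: "k2 * k < 0"
            proof (rule ccontr)
              assume "\<not> k2 * k < 0"
              then have "0 \<le> k2 * k" by simp
              then have "(0 \<le> k2 \<and> 0 \<le> k) \<or> (k2 \<le> 0 \<and> k \<le> 0)" by (simp add: zero_le_mult_iff)
              then have "\<bar>k\<bar> \<le> \<bar>k1 + k3\<bar>" using f(2) by arith
              also have "\<dots> \<le> int Ln" using f(4,5) by (simp add: Ln_def abs_le_iff)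
              finally have "real_of_int \<bar>k\<bar> \<le> L" by (simp add: L_def)
              then show False using f(6) big L1 by linarith
            qed
            then have "k2 \<noteq> 0" by auto
            then show "1 \<le> \<bar>kcomp 2 r\<bar> \<and> kcomp 2 r * (a0 + y - kcomp 2 r) < 0" using re ek neg by auto
          qed
          show "\<And>r. r \<in> {r \<in> F. kcomp 3 r = y} \<Longrightarrow> Phi al r = ph al a0 + ph al y - ph al (kcomp 2 r) - ph al (a0 + y - kcomp 2 r)"
          proof -
            fix r assume rF: "r \<in> {r \<in> F. kcomp 3 r = y}"
            obtain k k1 k2 k3 where re: "r = (k, k1, k2, k3)" by (cases r)
            have "k1 = a0" "k3 = y" "k = k1 - k2 + k3" using FM rF re by auto
            then have "a0 + y - k2 = k" by simp
            then show "Phi al r = ph al a0 + ph al y - ph al (kcomp 2 r) - ph al (a0 + y - kcomp 2 r)"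
              using re \<open>k1 = a0\<close> \<open>k3 = y\<close> by (simp add: Phi_def)
          qed
          show "\<And>r. r \<in> {r \<in> F. kcomp 3 r = y} \<Longrightarrow> \<bar>Phi al r - m\<bar> \<le> C0"
          proof -
            fix r assume rF: "r \<in> {r \<in> F. kcomp 3 r = y}"
            obtain k k1 k2 k3 where re: "r = (k, k1, k2, k3)" by (cases r)
            show "\<bar>Phi al r - m\<bar> \<le> C0" using FM rF re by auto
          qed
        qed
        then show "real (card {r \<in> F. kcomp 3 r = y}) \<le> Pb al C0" using cp by linarith
      qed
      also have "\<dots> \<le> Kc al C0 * L"
        using cp consts_pos(1)[of al C0] al C0 L1 by (simp add: Kc_def algebra_simps)
      finally show ?thesis .
    qed
  qed
  then show ?thesis unfolding F_def L_def Ln_def .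
qed

end

definition sw :: "idx4 \<Rightarrow> idx4" where "sw r = (case r of (k, k1, k2, k3) \<Rightarrow> (k, k3, k2, k1))"

lemma sw_simp[simp]: "sw (k, k1, k2, k3) = (k, k3, k2, k1)" by (simp add: sw_def)
lemma sw_sw[simp]: "sw (sw r) = r" by (cases r) simp

lemma sw_resS: "(k, k1, k2, k3) \<in> resS al C0 m N N1 N2 N3 \<longleftrightarrow> (k, k3, k2, k1) \<in> resS al C0 m N N3 N2 N1"
proof -
  have "Phi al (k, k3, k2, k1) = Phi al (k, k1, k2, k3)" by (simp add: Phi_def)
  then show ?thesis unfolding mem_resS by auto
qed

definition swj :: "nat \<Rightarrow> nat" where "swj j = (if j = 1 then 3 else if j = 3 then 1 else j)"

lemma kcomp_sw: "j \<in> {1,2,3} \<Longrightarrow> kcomp (swj j) (sw r) = kcomp j r"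
  by (cases r) (auto simp: swj_def kcomp_def)

lemma sw_Bset:
  assumes "js \<in> {1,2,3}"
  shows "r \<in> Bset al C0 m N N1 N2 N3 js G \<longleftrightarrow> sw r \<in> Bset al C0 m N N3 N2 N1 (swj js) G"
proof -
  obtain k k1 k2 k3 where re: "r = (k, k1, k2, k3)" by (cases r)
  have kc: "kcomp (swj js) (sw r) = kcomp js r" using kcomp_sw[OF assms] .
  have A: "r \<in> resS al C0 m N N1 N2 N3 \<longleftrightarrow> sw r \<in> resS al C0 m N N3 N2 N1" using sw_resS re by simp
  have B: "fst (sw r) = fst r" using re by simp
  show ?thesis unfolding Bset_def mem_Collect_eq by (simp only: A B kc)
qed

lemma sw_row:
  assumes "js \<in> {1,2,3}" "j \<in> {1,2,3}"
  shows "card {r \<in> Bset al C0 m N N1 N2 N3 js G. kcomp j r = a0}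
       = card {r \<in> Bset al C0 m N N3 N2 N1 (swj js) G. kcomp (swj j) r = a0}"
proof -
  have "sw ` {r \<in> Bset al C0 m N N1 N2 N3 js G. kcomp j r = a0} = {r \<in> Bset al C0 m N N3 N2 N1 (swj js) G. kcomp (swj j) r = a0}"
  proof (intro equalityI subsetI)
    fix x assume "x \<in> sw ` {r \<in> Bset al C0 m N N1 N2 N3 js G. kcomp j r = a0}"
    then obtain r where r0: "r \<in> {r \<in> Bset al C0 m N N1 N2 N3 js G. kcomp j r = a0}" "x = sw r" by (rule imageE)
    then have r: "r \<in> Bset al C0 m N N1 N2 N3 js G" "kcomp j r = a0" "x = sw r" by simp_all
    have "sw r \<in> Bset al C0 m N N3 N2 N1 (swj js) G" using r(1) sw_Bset[OF assms(1), of r] by blast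
    moreover have "kcomp (swj j) (sw r) = a0" using trans[OF kcomp_sw[OF assms(2), of r] r(2)] .
    ultimately show "x \<in> {r \<in> Bset al C0 m N N3 N2 N1 (swj js) G. kcomp (swj j) r = a0}" using r(3) by blast
  next
    fix x assume x: "x \<in> {r \<in> Bset al C0 m N N3 N2 N1 (swj js) G. kcomp (swj j) r = a0}"
    have "sw (sw x) \<in> Bset al C0 m N N3 N2 N1 (swj js) G" using x unfolding sw_sw by blast
    then have "sw x \<in> Bset al C0 m N N1 N2 N3 js G" using sw_Bset[OF assms(1), of "sw x"] by blast
    moreover have "kcomp j (sw x) = a0"
    proof -
      have e: "kcomp (swj j) x = kcomp j (sw x)" using kcomp_sw[OF assms(2), of "sw x"] unfolding sw_sw .
      show ?thesis using x unfolding e[symmetric] by blast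
    qed
    ultimately have "sw x \<in> {r \<in> Bset al C0 m N N1 N2 N3 js G. kcomp j r = a0}" by blast
    show "x \<in> sw ` {r \<in> Bset al C0 m N N1 N2 N3 js G. kcomp j r = a0}"
    proof (rule image_eqI)
      show "x = sw (sw x)" by simp
      show "sw x \<in> {r \<in> Bset al C0 m N N1 N2 N3 js G. kcomp j r = a0}" by fact
    qed
  qed
  moreover have "inj_on sw {r \<in> Bset al C0 m N N1 N2 N3 js G. kcomp j r = a0}"
  proof (rule inj_onI)
    fix u v assume "sw u = sw v"
    then have "sw (sw u) = sw (sw v)" by (rule arg_cong)
    then show "u = v" by simp
  qed
  then have "card (sw ` {r \<in> Bset al C0 m N N1 N2 N3 js G. kcomp j r = a0}) = card {r \<in> Bset al C0 m N N1 N2 N3 js G. kcomp j r = a0}"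
    by (rule card_image)
  ultimately show ?thesis by simp
qed

lemma row_all:
  fixes al C0 m G :: real and N N1 N2 N3 :: nat
  assumes al: "1 < al" "al < 2" and C0: "0 < C0"
    and N: "1 \<le> N1" "1 \<le> N2" "1 \<le> N3"
    and js: "js \<in> {1,2,3}" and j: "j \<in> {1,2,3}"
    and mx: "(if js = 1 then N1 else if js = 2 then N2 else N3) = max N1 (max N2 N3)"
  shows "real (card {r \<in> Bset al C0 m N N1 N2 N3 js G. kcomp j r = a0})
     \<le> Kc al C0 * real (N1 + N2 + N3 - max N1 (max N2 N3))"
proof -
  consider "js = 1" | "js = 2" | "js = 3" using js by auto
  then show ?thesis
  proof cases
    case 1
    then have h: "N2 \<le> N1" "N3 \<le> N1" "N1 + N2 + N3 - max N1 (max N2 N3) = N2 + N3" using mx by auto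
    consider "j = 1" | "j = 2" | "j = 3" using j by auto
    then show ?thesis
    proof cases
      case 1 then show ?thesis using js1_row1[OF al C0 N(2,3) h(1,2), of m N G a0] \<open>js = 1\<close> h(3) by simp
    next
      case 2 then show ?thesis using js1_row2[OF al C0 N(2,3) h(1,2), of m N G a0] \<open>js = 1\<close> h(3) by simp
    next
      case 3 then show ?thesis using js1_row3[OF al C0 N(2,3) h(1,2), of m N G a0] \<open>js = 1\<close> h(3) by simp
    qed
  next
    case 2
    then have h: "N1 \<le> N2" "N3 \<le> N2" "N1 + N2 + N3 - max N1 (max N2 N3) = N1 + N3" using mx by auto
    consider "j = 1" | "j = 2" | "j = 3" using j by auto
    then show ?thesis
    proof cases
      case 1 then show ?thesis using js2_row1[OF al C0 N(1,3) h(1,2), of m N G a0] \<open>js = 2\<close> h(3) by simp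
    next
      case 2 then show ?thesis using js2_row2[OF al C0 N(1,3) h(1,2), of m N G a0] \<open>js = 2\<close> h(3) by simp
    next
      case 3
      have "card {r \<in> Bset al C0 m N N1 N2 N3 js G. kcomp j r = a0}
          = card {r \<in> Bset al C0 m N N3 N2 N1 (swj js) G. kcomp (swj j) r = a0}"
        by (rule sw_row[OF js j])
      also have "\<dots> = card {r \<in> Bset al C0 m N N3 N2 N1 2 G. kcomp 1 r = a0}"
        using \<open>js = 2\<close> 3 by (simp add: swj_def)
      finally show ?thesis using js2_row1[OF al C0 N(3,1) h(2,1), of m N G a0] h(3) by (simp add: add.commute)
    qed
  next
    case 3
    then have h: "N1 \<le> N3" "N2 \<le> N3" "N1 + N2 + N3 - max N1 (max N2 N3) = N2 + N1" using mx
      by (auto split: if_splits simp: max_def)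
    have sj: "swj j \<in> {1,2,3}" using j by (auto simp: swj_def)
    have eq: "card {r \<in> Bset al C0 m N N1 N2 N3 js G. kcomp j r = a0}
        = card {r \<in> Bset al C0 m N N3 N2 N1 1 G. kcomp (swj j) r = a0}"
      using sw_row[OF js j] \<open>js = 3\<close> by (simp add: swj_def)
    consider "swj j = 1" | "swj j = 2" | "swj j = 3" using sj by auto
    then show ?thesis
    proof cases
      case 1 then show ?thesis using js1_row1[OF al C0 N(2,1) h(2,1), of m N G a0] h(3) eq by (simp add: add.commute)
    next
      case 2 then show ?thesis using js1_row2[OF al C0 N(2,1) h(2,1), of m N G a0] h(3) eq by (simp add: add.commute)
    next
      case 3 then show ?thesis using js1_row3[OF al C0 N(2,1) h(2,1), of m N G a0] h(3) eq by (simp add: add.commute)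
    qed
  qed
qed


lemma opnorm_le:
  fixes H :: "'b \<Rightarrow> 'c \<Rightarrow> complex" and \<beta> :: "'c \<Rightarrow> 'b" and M :: real
  assumes fin: "finite {c. \<exists>b. H b c \<noteq> 0}"
    and det: "\<And>b c. H b c \<noteq> 0 \<Longrightarrow> b = \<beta> c"
    and bd: "\<And>b c. cmod (H b c) \<le> 1"
    and cnt: "\<And>b. real (card {c. H b c \<noteq> 0}) \<le> M"
    and M: "0 \<le> M"
  shows "op_norm_sq H \<le> M"
proof -
  define Ss where "Ss = {(\<Sum>\<^sub>\<infinity>c. (cmod (\<Sum>\<^sub>\<infinity>b. H b c * z b))\<^sup>2) | z.
       (\<lambda>b. (cmod (z b))\<^sup>2) summable_on UNIV \<and> (\<Sum>\<^sub>\<infinity>b. (cmod (z b))\<^sup>2) = 1}"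
  define Cs where "Cs = {c. \<exists>b. H b c \<noteq> 0}"
  have ne: "Ss \<noteq> {}"
  proof -
    define z :: "'b \<Rightarrow> complex" where "z = (\<lambda>b. if b = undefined then 1 else 0)"
    have s1: "(\<lambda>b. (cmod (z b))\<^sup>2) summable_on UNIV \<longleftrightarrow> (\<lambda>b. (cmod (z b))\<^sup>2) summable_on {undefined}"
      by (rule summable_on_cong_neutral) (auto simp: z_def)
    have s2: "(\<Sum>\<^sub>\<infinity>b. (cmod (z b))\<^sup>2) = (\<Sum>\<^sub>\<infinity>b\<in>{undefined}. (cmod (z b))\<^sup>2)"
      by (rule infsum_cong_neutral) (auto simp: z_def)
    have "(\<lambda>b. (cmod (z b))\<^sup>2) summable_on UNIV \<and> (\<Sum>\<^sub>\<infinity>b. (cmod (z b))\<^sup>2) = 1"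
      using s1 s2 by (simp add: z_def)
    then show ?thesis unfolding Ss_def by blast
  qed
  have ub: "\<And>s. s \<in> Ss \<Longrightarrow> s \<le> M"
  proof -
    fix s assume "s \<in> Ss"
    then obtain z where s: "s = (\<Sum>\<^sub>\<infinity>c. (cmod (\<Sum>\<^sub>\<infinity>b. H b c * z b))\<^sup>2)"
      and zs: "(\<lambda>b. (cmod (z b))\<^sup>2) summable_on UNIV" and z1: "(\<Sum>\<^sub>\<infinity>b. (cmod (z b))\<^sup>2) = 1"
      unfolding Ss_def by blast
    define f where "f = (\<lambda>b. (cmod (z b))\<^sup>2)"
    have inner: "\<And>c. (\<Sum>\<^sub>\<infinity>b. H b c * z b) = H (\<beta> c) c * z (\<beta> c)"
    proof -
      fix c
      have "(\<Sum>\<^sub>\<infinity>b. H b c * z b) = (\<Sum>\<^sub>\<infinity>b\<in>{\<beta> c}. H b c * z b)"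
        by (rule infsum_cong_neutral) (use det in auto)
      then show "(\<Sum>\<^sub>\<infinity>b. H b c * z b) = H (\<beta> c) c * z (\<beta> c)" by simp
    qed
    have "s = (\<Sum>\<^sub>\<infinity>c. (cmod (H (\<beta> c) c * z (\<beta> c)))\<^sup>2)" unfolding s inner ..
    also have "\<dots> = (\<Sum>\<^sub>\<infinity>c\<in>Cs. (cmod (H (\<beta> c) c * z (\<beta> c)))\<^sup>2)"
      by (rule infsum_cong_neutral) (auto simp: Cs_def)
    also have "\<dots> = (\<Sum>c\<in>Cs. (cmod (H (\<beta> c) c * z (\<beta> c)))\<^sup>2)"
      using fin by (simp add: Cs_def)
    also have "\<dots> \<le> (\<Sum>c\<in>Cs. f (\<beta> c))"
    proof (rule sum_mono)
      fix c assume "c \<in> Cs"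
      have "cmod (H (\<beta> c) c * z (\<beta> c)) \<le> cmod (z (\<beta> c))"
        using bd[of "\<beta> c" c] by (simp add: norm_mult mult_left_le_one_le)
      then show "(cmod (H (\<beta> c) c * z (\<beta> c)))\<^sup>2 \<le> f (\<beta> c)"
        unfolding f_def by (intro power_mono) auto
    qed
    also have "\<dots> = (\<Sum>b\<in>\<beta> ` Cs. (\<Sum>c\<in>{c. c \<in> Cs \<and> \<beta> c = b}. f (\<beta> c)))"
      using fin unfolding Cs_def by (rule sum.image_gen)
    also have "\<dots> = (\<Sum>b\<in>\<beta> ` Cs. real (card {c. c \<in> Cs \<and> \<beta> c = b}) * f b)"
      by (intro sum.cong) auto
    also have "\<dots> \<le> (\<Sum>b\<in>\<beta> ` Cs. M * f b)"
    proof (rule sum_mono)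
      fix b assume "b \<in> \<beta> ` Cs"
      have "{c. c \<in> Cs \<and> \<beta> c = b} \<subseteq> {c. H b c \<noteq> 0}"
      proof
        fix c assume "c \<in> {c. c \<in> Cs \<and> \<beta> c = b}"
        then obtain b' where "H b' c \<noteq> 0" "\<beta> c = b" unfolding Cs_def by auto
        then show "c \<in> {c. H b c \<noteq> 0}" using det by fastforce
      qed
      moreover have "finite {c. H b c \<noteq> 0}" using fin by (rule finite_subset[rotated]) auto
      ultimately have "card {c. c \<in> Cs \<and> \<beta> c = b} \<le> card {c. H b c \<noteq> 0}" by (rule card_mono[rotated])
      then have "real (card {c. c \<in> Cs \<and> \<beta> c = b}) \<le> M" using cnt[of b] by linarith
      then show "real (card {c. c \<in> Cs \<and> \<beta> c = b}) * f b \<le> M * f b"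
        unfolding f_def by (intro mult_right_mono) auto
    qed
    also have "\<dots> = M * (\<Sum>b\<in>\<beta> ` Cs. f b)" by (simp add: sum_distrib_left)
    also have "\<dots> \<le> M * 1"
    proof (rule mult_left_mono[OF _ M])
      have "(\<Sum>b\<in>\<beta> ` Cs. f b) = (\<Sum>\<^sub>\<infinity>b\<in>\<beta> ` Cs. f b)" using fin by (simp add: Cs_def)
      also have "\<dots> \<le> (\<Sum>\<^sub>\<infinity>b. f b)"
        by (rule infsum_mono_neutral) (use fin zs in \<open>auto simp: Cs_def f_def\<close>)
      finally show "(\<Sum>b\<in>\<beta> ` Cs. f b) \<le> 1" using z1 by (simp add: f_def)
    qed
    finally show "s \<le> M" by simp
  qed
  have "Sup Ss \<le> M" by (rule cSup_least[OF ne ub])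
  then show ?thesis unfolding op_norm_sq_def Ss_def .
qed


lemma T_eq: "indicator (Bset al C0 m N N1 N2 N3 js G) x * Tbase al C0 m N N1 N2 N3 x
   = (indicator (Bset al C0 m N N1 N2 N3 js G) x :: complex)"
  by (auto simp: Tbase_def Bset_def indicator_def)

lemma hs_T: "hs_norm_sq (\<lambda>x. indicator (Bset al C0 m N N1 N2 N3 js G) x * Tbase al C0 m N N1 N2 N3 x)
   = real (card (Bset al C0 m N N1 N2 N3 js G))"
proof -
  let ?B = "Bset al C0 m N N1 N2 N3 js G"
  have "hs_norm_sq (\<lambda>x. indicator ?B x * Tbase al C0 m N N1 N2 N3 x)
      = (\<Sum>\<^sub>\<infinity>x. (cmod (indicator ?B x :: complex))\<^sup>2)" unfolding hs_norm_sq_def T_eq ..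
  also have "\<dots> = (\<Sum>\<^sub>\<infinity>x\<in>?B. (cmod (indicator ?B x :: complex))\<^sup>2)"
    by (rule infsum_cong_neutral) (auto simp: indicator_def)
  also have "\<dots> = (\<Sum>x\<in>?B. 1)" using finite_Bset by (simp add: indicator_def)
  finally show ?thesis by simp
qed

lemma op_gen:
  fixes H :: "int \<Rightarrow> 'c \<Rightarrow> complex" and \<beta> :: "'c \<Rightarrow> int" and pj :: "idx4 \<Rightarrow> 'c"
  assumes Hdef: "\<And>b c. H b c = indicator (Bset al C0 m N N1 N2 N3 js G) (emb b c)"
    and emb: "\<And>b c. emb b c \<in> Bset al C0 m N N1 N2 N3 js G \<Longrightarrow> b = \<beta> c \<and> kcomp j (emb b c) = b \<and> pj (emb b c) = c"
    and cnt: "\<And>a. real (card {r \<in> Bset al C0 m N N1 N2 N3 js G. kcomp j r = a}) \<le> M"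
    and M: "0 \<le> M"
  shows "op_norm_sq H \<le> M"
proof (rule opnorm_le[where \<beta>=\<beta>])
  let ?B = "Bset al C0 m N N1 N2 N3 js G"
  have sub: "{c. \<exists>b. H b c \<noteq> 0} \<subseteq> pj ` ?B"
  proof
    fix c assume "c \<in> {c. \<exists>b. H b c \<noteq> 0}"
    then obtain b where "emb b c \<in> ?B" using Hdef by (auto simp: indicator_def split: if_splits)
    then show "c \<in> pj ` ?B" using emb by (metis image_eqI)
  qed
  show "finite {c. \<exists>b. H b c \<noteq> 0}" using sub by (rule finite_subset) (simp add: finite_Bset)
  show "\<And>b c. H b c \<noteq> 0 \<Longrightarrow> b = \<beta> c" using Hdef emb by (auto simp: indicator_def split: if_splits)
  show "\<And>b c. cmod (H b c) \<le> 1" using Hdef by (simp add: indicator_def)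
  show "0 \<le> M" by (rule M)
  fix b
  have "{c. H b c \<noteq> 0} \<subseteq> pj ` {r \<in> ?B. kcomp j r = b}"
  proof
    fix c assume "c \<in> {c. H b c \<noteq> 0}"
    then have "emb b c \<in> ?B" using Hdef by (auto simp: indicator_def split: if_splits)
    then show "c \<in> pj ` {r \<in> ?B. kcomp j r = b}" using emb by (metis (mono_tags, lifting) image_eqI mem_Collect_eq)
  qed
  then have "card {c. H b c \<noteq> 0} \<le> card (pj ` {r \<in> ?B. kcomp j r = b})"
    by (rule card_mono[rotated]) (use finite_Bset in simp)
  also have "\<dots> \<le> card {r \<in> ?B. kcomp j r = b}" by (rule card_image_le) (use finite_Bset in simp)
  finally show "real (card {c. H b c \<noteq> 0}) \<le> M" using cnt[of b] by linarith
qed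

lemma Bset_eq: "(k, k1, k2, k3) \<in> Bset al C0 m N N1 N2 N3 js G \<Longrightarrow> k = k1 - k2 + k3"
  using B_mem by blast


lemma Ls_med: "N1 + N2 + N3 - max N1 (max N2 N3) \<le> 2 * med3 N1 N2 N3"
  unfolding med3_def max_def min_def by auto

lemma med_ge_min: "min N1 (min N2 N3) \<le> med3 N1 N2 N3"
  unfolding med3_def max_def min_def by auto

theorem corollary2p16:
  fixes \<alpha> C0 :: real
  assumes "1 < \<alpha>" and "\<alpha> < 2" and "0 < C0"
  shows "\<exists>C>0. \<forall>(N::nat) (N1::nat) (N2::nat) (N3::nat) (m::real) (\<Gamma>::real) (js::nat).
     dyadic N \<and> dyadic N1 \<and> dyadic N2 \<and> dyadic N3 \<and>
     1 \<le> N1 \<and> 1 \<le> N2 \<and> 1 \<le> N3 \<and> N1 \<le> N \<and> N2 \<le> N \<and> N3 \<le> N \<and>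
     js \<in> {1, 2, 3} \<and>
     (if js = 1 then N1 else if js = 2 then N2 else N3) = max N1 (max N2 N3) \<and>
     0 < \<Gamma> \<longrightarrow>
     (let T = (\<lambda>x. indicator (Bset \<alpha> C0 m N N1 N2 N3 js \<Gamma>) x * Tbase \<alpha> C0 m N N1 N2 N3 x);
          Nmin = real (min N1 (min N2 N3)); Nmed = real (med3 N1 N2 N3) in
        hs_norm_sq T \<le> C * Nmin * Nmed \<and>
        op_norm_sq (\<lambda>k1 (k, k2, k3). T (k, k1, k2, k3)) \<le> C * Nmed \<and>
        op_norm_sq (\<lambda>k2 (k, k1, k3). T (k, k1, k2, k3)) \<le> C * Nmed \<and>
        op_norm_sq (\<lambda>k3 (k, k1, k2). T (k, k1, k2, k3)) \<le> C * Nmed)"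
proof -
  have al: "1 < \<alpha>" "\<alpha> < 2" and C0: "0 < C0" using assms by auto
  define K where "K = Kc \<alpha> C0"
  have K0: "0 \<le> K" unfolding K_def Kc_def using consts_pos[of \<alpha> C0] al C0 by auto
  show ?thesis
  proof (rule exI[where x="6 * K + 1"], intro conjI allI impI)
    show "0 < 6 * K + 1" using K0 by simp
  next
    fix N N1 N2 N3 :: nat and m \<Gamma> :: real and js :: nat
    assume H: "dyadic N \<and> dyadic N1 \<and> dyadic N2 \<and> dyadic N3 \<and>
     1 \<le> N1 \<and> 1 \<le> N2 \<and> 1 \<le> N3 \<and> N1 \<le> N \<and> N2 \<le> N \<and> N3 \<le> N \<and>
     js \<in> {1, 2, 3} \<and>
     (if js = 1 then N1 else if js = 2 then N2 else N3) = max N1 (max N2 N3) \<and>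
     0 < \<Gamma>"
    then have N: "1 \<le> N1" "1 \<le> N2" "1 \<le> N3" and js: "js \<in> {1,2,3}"
      and mx: "(if js = 1 then N1 else if js = 2 then N2 else N3) = max N1 (max N2 N3)" by auto
    define B where "B = Bset \<alpha> C0 m N N1 N2 N3 js \<Gamma>"
    define Ls where "Ls = N1 + N2 + N3 - max N1 (max N2 N3)"
    define Nmi where "Nmi = min N1 (min N2 N3)"
    define Nme where "Nme = med3 N1 N2 N3"
    have row: "\<And>j a. j \<in> {1,2,3} \<Longrightarrow> real (card {r \<in> B. kcomp j r = a}) \<le> K * real Ls"
      unfolding B_def K_def Ls_def using row_all[OF al C0 N js _ mx] by blast
    have Lsm: "real Ls \<le> 2 * real Nme" unfolding Ls_def Nme_def using Ls_med[of N1 N2 N3] by linarith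
    have M0: "0 \<le> K * real Ls" using K0 by simp
    have Mle: "K * real Ls \<le> (6 * K + 1) * real Nme"
    proof -
      have "K * real Ls \<le> K * (2 * real Nme)" using Lsm K0 by (intro mult_left_mono) auto
      also have "\<dots> \<le> (6 * K + 1) * real Nme" using K0 by (simp add: algebra_simps)
      finally show ?thesis .
    qed
    define j0 :: nat where "j0 = (if N1 \<le> N2 \<and> N1 \<le> N3 then 1 else if N2 \<le> N3 then 2 else 3)"
    have j0: "j0 \<in> {1,2,3}" unfolding j0_def by auto
    have j0b: "\<And>r. r \<in> B \<Longrightarrow> \<bar>kcomp j0 r\<bar> \<le> int Nmi"
    proof -
      fix r assume rB: "r \<in> B"
      obtain k k1 k2 k3 where re: "r = (k, k1, k2, k3)" by (cases r)
      have "\<bar>k1\<bar> \<le> int N1" "\<bar>k2\<bar> \<le> int N2" "\<bar>k3\<bar> \<le> int N3" using B_mem rB re unfolding B_def by auto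
      then show "\<bar>kcomp j0 r\<bar> \<le> int Nmi" using re unfolding j0_def Nmi_def by (auto simp: kcomp_def)
    qed
    have cardB: "real (card B) \<le> 3 * real Nmi * (K * real Ls)"
    proof (rule big_case[where g="kcomp j0" and Y="{- int Nmi..int Nmi}"])
      show "finite {- int Nmi..int Nmi}" by simp
      have "1 \<le> Nmi" using N by (simp add: Nmi_def)
      then show "real (card {- int Nmi..int Nmi}) \<le> 3 * real Nmi" by simp
      show "kcomp j0 ` B \<subseteq> {- int Nmi..int Nmi}" using j0b by (force simp: abs_le_iff)
      show "0 \<le> K * real Ls" by (rule M0)
      show "\<And>y. y \<in> {- int Nmi..int Nmi} \<Longrightarrow> real (card {r \<in> B. kcomp j0 r = y}) \<le> K * real Ls"
        using row[OF j0] by blast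
    qed
    have HS: "real (card B) \<le> (6 * K + 1) * real Nmi * real Nme"
    proof -
      have "3 * real Nmi * (K * real Ls) \<le> 3 * real Nmi * (K * (2 * real Nme))"
        using Lsm K0 by (intro mult_left_mono) auto
      also have "\<dots> \<le> (6 * K + 1) * real Nmi * real Nme" by (simp add: algebra_simps)
      finally show ?thesis using cardB by linarith
    qed
    show "let T = (\<lambda>x. indicator (Bset \<alpha> C0 m N N1 N2 N3 js \<Gamma>) x * Tbase \<alpha> C0 m N N1 N2 N3 x);
          Nmin = real (min N1 (min N2 N3)); Nmed = real (med3 N1 N2 N3) in
        hs_norm_sq T \<le> (6 * K + 1) * Nmin * Nmed \<and>
        op_norm_sq (\<lambda>k1 (k, k2, k3). T (k, k1, k2, k3)) \<le> (6 * K + 1) * Nmed \<and>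
        op_norm_sq (\<lambda>k2 (k, k1, k3). T (k, k1, k2, k3)) \<le> (6 * K + 1) * Nmed \<and>
        op_norm_sq (\<lambda>k3 (k, k1, k2). T (k, k1, k2, k3)) \<le> (6 * K + 1) * Nmed"
      unfolding Let_def
    proof (intro conjI)
      show "hs_norm_sq (\<lambda>x. indicator (Bset \<alpha> C0 m N N1 N2 N3 js \<Gamma>) x * Tbase \<alpha> C0 m N N1 N2 N3 x)
          \<le> (6 * K + 1) * real (min N1 (min N2 N3)) * real (med3 N1 N2 N3)"
        unfolding hs_T using HS unfolding B_def Nmi_def Nme_def .
      have "op_norm_sq (\<lambda>k1 (k, k2, k3). indicator (Bset \<alpha> C0 m N N1 N2 N3 js \<Gamma>) (k, k1, k2, k3) * Tbase \<alpha> C0 m N N1 N2 N3 (k, k1, k2, k3))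
          \<le> K * real Ls"
      proof (rule op_gen[where emb="\<lambda>b c. case c of (k, k2, k3) \<Rightarrow> (k, b, k2, k3)"
            and \<beta>="\<lambda>(k, k2, k3). k + k2 - k3" and pj="\<lambda>(k, k1, k2, k3). (k, k2, k3)" and j=1])
        show "\<And>b c. (case c of (k, k2, k3) \<Rightarrow> indicator (Bset \<alpha> C0 m N N1 N2 N3 js \<Gamma>) (k, b, k2, k3) * Tbase \<alpha> C0 m N N1 N2 N3 (k, b, k2, k3))
            = indicator (Bset \<alpha> C0 m N N1 N2 N3 js \<Gamma>) (case c of (k, k2, k3) \<Rightarrow> (k, b, k2, k3))"
          by (auto simp: T_eq split: prod.splits)
        show "\<And>b c. (case c of (k, k2, k3) \<Rightarrow> (k, b, k2, k3)) \<in> Bset \<alpha> C0 m N N1 N2 N3 js \<Gamma> \<Longrightarrow>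
            b = (case c of (k, k2, k3) \<Rightarrow> k + k2 - k3) \<and> kcomp 1 (case c of (k, k2, k3) \<Rightarrow> (k, b, k2, k3)) = b \<and>
            (case (case c of (k, k2, k3) \<Rightarrow> (k, b, k2, k3)) of (k, k1, k2, k3) \<Rightarrow> (k, k2, k3)) = c"
          by (auto split: prod.splits dest: Bset_eq)
        show "\<And>a. real (card {r \<in> Bset \<alpha> C0 m N N1 N2 N3 js \<Gamma>. kcomp 1 r = a}) \<le> K * real Ls"
          using row[of 1] unfolding B_def by simp
      qed (rule M0)
      then show "op_norm_sq (\<lambda>k1 (k, k2, k3). indicator (Bset \<alpha> C0 m N N1 N2 N3 js \<Gamma>) (k, k1, k2, k3) * Tbase \<alpha> C0 m N N1 N2 N3 (k, k1, k2, k3))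
          \<le> (6 * K + 1) * real (med3 N1 N2 N3)" using Mle unfolding Nme_def by linarith
      have "op_norm_sq (\<lambda>k2 (k, k1, k3). indicator (Bset \<alpha> C0 m N N1 N2 N3 js \<Gamma>) (k, k1, k2, k3) * Tbase \<alpha> C0 m N N1 N2 N3 (k, k1, k2, k3))
          \<le> K * real Ls"
      proof (rule op_gen[where emb="\<lambda>b c. case c of (k, k1, k3) \<Rightarrow> (k, k1, b, k3)"
            and \<beta>="\<lambda>(k, k1, k3). k1 + k3 - k" and pj="\<lambda>(k, k1, k2, k3). (k, k1, k3)" and j=2])
        show "\<And>b c. (case c of (k, k1, k3) \<Rightarrow> indicator (Bset \<alpha> C0 m N N1 N2 N3 js \<Gamma>) (k, k1, b, k3) * Tbase \<alpha> C0 m N N1 N2 N3 (k, k1, b, k3))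
            = indicator (Bset \<alpha> C0 m N N1 N2 N3 js \<Gamma>) (case c of (k, k1, k3) \<Rightarrow> (k, k1, b, k3))"
          by (auto simp: T_eq split: prod.splits)
        show "\<And>b c. (case c of (k, k1, k3) \<Rightarrow> (k, k1, b, k3)) \<in> Bset \<alpha> C0 m N N1 N2 N3 js \<Gamma> \<Longrightarrow>
            b = (case c of (k, k1, k3) \<Rightarrow> k1 + k3 - k) \<and> kcomp 2 (case c of (k, k1, k3) \<Rightarrow> (k, k1, b, k3)) = b \<and>
            (case (case c of (k, k1, k3) \<Rightarrow> (k, k1, b, k3)) of (k, k1, k2, k3) \<Rightarrow> (k, k1, k3)) = c"
          by (auto split: prod.splits dest: Bset_eq)
        show "\<And>a. real (card {r \<in> Bset \<alpha> C0 m N N1 N2 N3 js \<Gamma>. kcomp 2 r = a}) \<le> K * real Ls"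
          using row[of 2] unfolding B_def by simp
      qed (rule M0)
      then show "op_norm_sq (\<lambda>k2 (k, k1, k3). indicator (Bset \<alpha> C0 m N N1 N2 N3 js \<Gamma>) (k, k1, k2, k3) * Tbase \<alpha> C0 m N N1 N2 N3 (k, k1, k2, k3))
          \<le> (6 * K + 1) * real (med3 N1 N2 N3)" using Mle unfolding Nme_def by linarith
      have "op_norm_sq (\<lambda>k3 (k, k1, k2). indicator (Bset \<alpha> C0 m N N1 N2 N3 js \<Gamma>) (k, k1, k2, k3) * Tbase \<alpha> C0 m N N1 N2 N3 (k, k1, k2, k3))
          \<le> K * real Ls"
      proof (rule op_gen[where emb="\<lambda>b c. case c of (k, k1, k2) \<Rightarrow> (k, k1, k2, b)"
            and \<beta>="\<lambda>(k, k1, k2). k - k1 + k2" and pj="\<lambda>(k, k1, k2, k3). (k, k1, k2)" and j=3])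
        show "\<And>b c. (case c of (k, k1, k2) \<Rightarrow> indicator (Bset \<alpha> C0 m N N1 N2 N3 js \<Gamma>) (k, k1, k2, b) * Tbase \<alpha> C0 m N N1 N2 N3 (k, k1, k2, b))
            = indicator (Bset \<alpha> C0 m N N1 N2 N3 js \<Gamma>) (case c of (k, k1, k2) \<Rightarrow> (k, k1, k2, b))"
          by (auto simp: T_eq split: prod.splits)
        show "\<And>b c. (case c of (k, k1, k2) \<Rightarrow> (k, k1, k2, b)) \<in> Bset \<alpha> C0 m N N1 N2 N3 js \<Gamma> \<Longrightarrow>
            b = (case c of (k, k1, k2) \<Rightarrow> k - k1 + k2) \<and> kcomp 3 (case c of (k, k1, k2) \<Rightarrow> (k, k1, k2, b)) = b \<and>
            (case (case c of (k, k1, k2) \<Rightarrow> (k, k1, k2, b)) of (k, k1, k2, k3) \<Rightarrow> (k, k1, k2)) = c"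
          by (auto split: prod.splits dest: Bset_eq)
        show "\<And>a. real (card {r \<in> Bset \<alpha> C0 m N N1 N2 N3 js \<Gamma>. kcomp 3 r = a}) \<le> K * real Ls"
          using row[of 3] unfolding B_def by simp
      qed (rule M0)
      then show "op_norm_sq (\<lambda>k3 (k, k1, k2). indicator (Bset \<alpha> C0 m N N1 N2 N3 js \<Gamma>) (k, k1, k2, k3) * Tbase \<alpha> C0 m N N1 N2 N3 (k, k1, k2, k3))
          \<le> (6 * K + 1) * real (med3 N1 N2 N3)" using Mle unfolding Nme_def by linarith
    qed
  qed
qed


end
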